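(* Let $U\in\mathcal U_n$ and let $U'\in\mathcal U_{n+1}$ be obtained from $U$ by adding an $(n+1)$-st unit interval $I_{n+1}$ to the right of the intervals of $U$; let $\ell$ be the level of $n+1$ in $U'$. The area sequence of $p(U')$ is obtained from that of $p(U)$ by inserting one letter equal to $\ell$. Let $r$ be the number of occurrences of the letter $\ell$ in the area sequence of $p(U)$ plus the number of occurrences of the letter $\ell-1$ appearing after the position of this inserted letter $\ell$ in the area sequence of $p(U')$. Then $\zeta(p(U'))$ is obtained from $\zeta(p(U))$ by adding a final peak in position $(n-r,n+1)$.
   Context: A unit interval order on $\{1,\dots,n\}$ is given by closed intervals $I_1,\dots,I_n$ of length $1$, numbered from left to right, with $i\prec j$ iff $I_i$ lies strictly to the left of $I_j$; $\mathcal U_n$ is the set of these; adding $I_{n+1}$ to the right means $I_1,\dots,I_{n+1}$ remain numbered from left to right. Levels in $U'$: $\ell(1)=0$, and $\ell(j)=\max_{i\prec j}\ell(i)+1$ (or $0$ if no $i\prec j$). A Dyck path of length $n$ is a lattice path from $(0,0)$ to $(n,n)$ with up steps $a$ and right steps $b$ never going below $y=x$; its area sequence lists row by row from bottom to top the number of unit boxes between path and diagonal. For a nonnegative integer sequence $w$, $P(w)$ is the poset on $\{1,\dots,n\}$ with $i\prec j$ iff $w_j-w_i\ge 2$, or $w_j-w_i=1$ and $i<j$. For each $U\in\mathcal U_n$ there is a unique $w$ that is the area sequence of a Dyck path with $P(w)\cong U$; $p(U)$ is the Dyck path with area sequence $w$. The zeta map: label the top endpoint of each up step of $D$ by $a$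 and the right endpoint of each right step by $b$; read the labels along $y=x$ from bottom-left to top-right, then along $y=x+1$, then $y=x+2$, etc.; reading $b$ as an up step and $a$ as a right step gives $\zeta(D)$. Adding a final peak in position $(i,n+1)$ to a Dyck path $D$ of length $n$ means: $D$ passes through $(i,n)$, and the new path of length $n+1$ follows $D$ up to $(i,n)$, then takes an up step to $(i,n+1)$, then right steps to $(n+1,n+1)$. *)

theory Defs
  imports Main "HOL.Real"
begin

text \<open>A unit interval order on {1..N} is given by the left endpoints x 1 \<le> ... \<le> x N
  of closed unit intervals [x i, x i + 1], numbered from left to right;
  i precedes j iff interval i lies strictly to the left of interval j.\<close>

definition sorted_endpoints :: "(nat \<Rightarrow> real) \<Rightarrow> nat \<Rightarrow> bool" where
  "sorted_endpoints x N \<longleftrightarrow> (\<forall>i j. 1 \<le> i \<longrightarrow> i \<le> j \<longrightarrow> j \<le> N \<longrightarrow> x i \<le> x j)"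

definition uio_prec :: "(nat \<Rightarrow> real) \<Rightarrow> nat \<Rightarrow> nat \<Rightarrow> bool" where
  "uio_prec x i j \<longleftrightarrow> x i + 1 < x j"

text \<open>In a unit interval order numbered from left to right every predecessor i of j
  satisfies 1 \<le> i < j, so the maximum ranges over i in {1..<j}.\<close>

fun level :: "(nat \<Rightarrow> nat \<Rightarrow> bool) \<Rightarrow> nat \<Rightarrow> nat" where
  "level R j = fold max (map (\<lambda>i. Suc (level R i)) (filter (\<lambda>i. R i j) [1..<j])) 0"

text \<open>A path is a list of steps: True = up step a, False = right step b.\<close>

definition dyck_path :: "nat \<Rightarrow> bool list \<Rightarrow> bool" where
  "dyck_path n D \<longleftrightarrow> length D = 2 * n \<and> count_list D True = n \<and>
     (\<forall>k \<le> length D. count_list (take k D) False \<le> count_list (take k D) True)"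

text \<open>Area sequence: for the up step in row u+1 (starting at height u) beginning at
  x-coordinate r, the number of full boxes between the path and the diagonal is u - r.\<close>

fun area_aux :: "nat \<Rightarrow> nat \<Rightarrow> bool list \<Rightarrow> nat list" where
  "area_aux u r [] = []"
| "area_aux u r (True # D) = (u - r) # area_aux (Suc u) r D"
| "area_aux u r (False # D) = area_aux u (Suc r) D"

definition area_seq :: "bool list \<Rightarrow> nat list" where
  "area_seq D = area_aux 0 0 D"

text \<open>P(w) on {1..n} (list w is 0-indexed, so w_i = w ! (i - 1)).\<close>

definition Pw :: "nat list \<Rightarrow> nat \<Rightarrow> nat \<Rightarrow> bool" where
  "Pw w i j \<longleftrightarrow> (int (w ! (j - 1)) - int (w ! (i - 1)) \<ge> 2 \<or>
                  (int (w ! (j - 1)) - int (w ! (i - 1)) = 1 \<and> i < j))"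

definition poset_iso :: "nat \<Rightarrow> (nat \<Rightarrow> nat \<Rightarrow> bool) \<Rightarrow> (nat \<Rightarrow> nat \<Rightarrow> bool) \<Rightarrow> bool" where
  "poset_iso n R S \<longleftrightarrow> (\<exists>f. bij_betw f {1..n} {1..n} \<and>
      (\<forall>i\<in>{1..n}. \<forall>j\<in>{1..n}. R i j \<longleftrightarrow> S (f i) (f j)))"

definition pmap :: "nat \<Rightarrow> (nat \<Rightarrow> nat \<Rightarrow> bool) \<Rightarrow> bool list" where
  "pmap n R = (THE D. dyck_path n D \<and> poset_iso n (Pw (area_seq D)) R)"

text \<open>After step t (0-indexed) the path is at (x_t, y_t); this lattice point carries the
  label of step t.  Labels are read diagonal by diagonal (y - x = 0, 1, 2, ...), and along
  each diagonal from bottom-left to top-right, i.e. in increasing t.  Then b (False)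
  becomes an up step (True) and a (True) becomes a right step (False).\<close>

definition diag_after :: "bool list \<Rightarrow> nat \<Rightarrow> int" where
  "diag_after D t = int (count_list (take (Suc t) D) True) - int (count_list (take (Suc t) D) False)"

definition zeta :: "bool list \<Rightarrow> bool list" where
  "zeta D = map (\<lambda>t. \<not> D ! t)
     (concat (map (\<lambda>k. filter (\<lambda>t. diag_after D t = k) [0..<length D]) [0..int (length D)]))"

text \<open>Adding a final peak in position (i, n+1) to a Dyck path D of length n:
  D passes through (i,n), and D' follows D to (i,n), then one up step, then right steps.\<close>

definition add_final_peak :: "nat \<Rightarrow> bool list \<Rightarrow> nat \<Rightarrow> bool list \<Rightarrow> bool" where
  "add_final_peak n D i D' \<longleftrightarrow> i \<le> n \<and> count_list (take (n + i) D) True = n \<and>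
     D' = take (n + i) D @ True # replicate (Suc n - i) False"

end

theory Submission
  imports Defs "HOL-Library.Multiset"
begin


declare level.simps[simp del]

fun stepok :: "nat list \<Rightarrow> bool" where
  "stepok (a # b # w) = (b \<le> Suc a \<and> stepok (b # w))"
| "stepok _ = True"

definition valid :: "nat list \<Rightarrow> bool" where
  "valid w \<longleftrightarrow> (w = [] \<or> (hd w = 0 \<and> stepok w))"

lemma stepok_nth: "stepok w \<longleftrightarrow> (\<forall>i. Suc i < length w \<longrightarrow> w ! Suc i \<le> Suc (w ! i))"
proof (induction w rule: stepok.induct)
  case (1 a b w)
  show ?case
  proof
    assume H: "stepok (a # b # w)"
    show "\<forall>i. Suc i < length (a # b # w) \<longrightarrow> (a # b # w) ! Suc i \<le> Suc ((a # b # w) ! i)"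
    proof (intro allI impI)
      fix i assume "Suc i < length (a # b # w)"
      then show "(a # b # w) ! Suc i \<le> Suc ((a # b # w) ! i)"
        using H 1 by (cases i) auto
    qed
  next
    assume H: "\<forall>i. Suc i < length (a # b # w) \<longrightarrow> (a # b # w) ! Suc i \<le> Suc ((a # b # w) ! i)"
    have "b \<le> Suc a" using H[rule_format, of 0] by simp
    moreover have "stepok (b # w)" using 1 H[rule_format, of "Suc i" for i] by auto
    ultimately show "stepok (a # b # w)" by simp
  qed
qed (auto simp: less_Suc_eq)

lemma valid_nth: "valid w \<longleftrightarrow> (\<forall>i < length w. w ! i \<le> (if i = 0 then 0 else Suc (w ! (i - 1))))"
  unfolding valid_def stepok_nth
  apply (cases w)
   apply simp
  apply (auto simp: nth_Cons split: nat.splits)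
  done

fun pf :: "nat list \<Rightarrow> bool list" where
  "pf [] = []"
| "pf [a] = True # replicate (Suc a) False"
| "pf (a # b # w) = True # replicate (Suc a - b) False @ pf (b # w)"

lemma area_aux_F: "area_aux u r (replicate k False @ D) = area_aux u (r + k) D"
  by (induction k arbitrary: r) auto

lemma area_aux_allF: "area_aux u r (replicate k False) = []"
  by (induction k arbitrary: r) auto

lemma area_aux_pf: "stepok (a # w) \<Longrightarrow> u = r + a \<Longrightarrow> area_aux u r (pf (a # w)) = a # w"
proof (induction w arbitrary: a u r)
  case Nil
  then show ?case by (simp add: area_aux_allF)
next
  case (Cons b w)
  have "area_aux u r (pf (a # b # w)) = a # area_aux (Suc u) (r + (Suc a - b)) (pf (b # w))"
    using Cons.prems area_aux_F by simp
  also have "\<dots> = a # b # w"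
    using Cons.prems Cons.IH[of b "Suc u" "r + (Suc a - b)"] by simp
  finally show ?case .
qed

lemma count_pf: "count_list (pf (a # w)) True = Suc (length w)"
  "count_list (pf (a # w)) False = Suc (length w) + a" if "stepok (a # w)"
  using that
  by (induction w arbitrary: a) (auto simp: count_list_eq_length_filter)


lemma count_rep[simp]: "count_list (replicate n x) y = (if x = y then n else 0)"
  by (induction n) auto

lemma count_take_le: "count_list (take j xs) y \<le> count_list xs y"
  by (induction xs arbitrary: j) (auto simp: take_Cons split: nat.splits)

lemma length_bool: "length (D::bool list) = count_list D True + count_list D False"
  by (induction D) auto

lemma pf_prefix: "stepok (a # w) \<Longrightarrow>
   count_list (take k (pf (a # w))) False \<le> count_list (take k (pf (a # w))) True + a"
proof (induction w arbitrary: a k)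
  case Nil
  then show ?case using count_take_le[of "k - 1" "replicate (Suc a) False" False] by (cases k) auto
next
  case (Cons b w)
  show ?case
  proof (cases k)
    case 0 then show ?thesis by simp
  next
    case (Suc k')
    define m where "m = Suc a - b"
    have IH: "count_list (take (k' - m) (pf (b # w))) False \<le> count_list (take (k' - m) (pf (b # w))) True + b"
      using Cons by simp
    have "take k (pf (a # b # w)) = True # take k' (replicate m False) @ take (k' - m) (pf (b # w))"
      using Suc by (simp add: m_def take_append)
    then show ?thesis using IH Cons.prems by (simp add: m_def min_def) arith
  qed
qed

lemma dyck_pf: "valid w \<Longrightarrow> dyck_path (length w) (pf w)"
proof (cases w)
  case Nil then show ?thesis by (simp add: dyck_path_def)
next
  case (Cons a w')
  assume v: "valid w"
  then have a0: "a = 0" and st: "stepok (a # w')" using Cons by (auto simp: valid_def)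
  show ?thesis
    unfolding dyck_path_def Cons
    using count_pf[OF st] pf_prefix[OF st] a0 length_bool[of "pf (a # w')"] by auto
qed

lemma area_pf: "valid w \<Longrightarrow> area_seq (pf w) = w"
  by (cases w) (auto simp: valid_def area_seq_def area_aux_pf)

definition Cond :: "nat \<Rightarrow> nat \<Rightarrow> bool list \<Rightarrow> bool" where
  "Cond u r D \<longleftrightarrow> (\<forall>k \<le> length D. r + count_list (take k D) False \<le> u + count_list (take k D) True)
      \<and> u + count_list D True = r + count_list D False"

lemma Cond_T: "Cond u r (True # D) \<Longrightarrow> Cond (Suc u) r D"
  unfolding Cond_def
proof (intro conjI allI impI)
  fix k assume H: "(\<forall>k\<le>length (True # D). r + count_list (take k (True # D)) False \<le> u + count_list (take k (True # D)) True) \<and>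
    u + count_list (True # D) True = r + count_list (True # D) False" "k \<le> length D"
  then show "r + count_list (take k D) False \<le> Suc u + count_list (take k D) True"
    using H(1)[THEN conjunct1, rule_format, of "Suc k"] by simp
qed auto

lemma Cond_F: "Cond u r (False # D) \<Longrightarrow> Cond u (Suc r) D"
  unfolding Cond_def
proof (intro conjI allI impI)
  fix k assume H: "(\<forall>k\<le>length (False # D). r + count_list (take k (False # D)) False \<le> u + count_list (take k (False # D)) True) \<and>
    u + count_list (False # D) True = r + count_list (False # D) False" "k \<le> length D"
  then show "Suc r + count_list (take k D) False \<le> u + count_list (take k D) True"
    using H(1)[THEN conjunct1, rule_format, of "Suc k"] by simp
qed auto

lemma Cond_le: "Cond u r D \<Longrightarrow> r \<le> u"
  unfolding Cond_def by (metis add.right_neutral count_list.simps(1) le0 take_0)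

lemma area_aux_nil_iff: "area_aux u r D = [] \<longleftrightarrow> True \<notin> set D"
  by (induction u r D rule: area_aux.induct) auto

lemma area_aux_hd_F: "Cond u r (False # D) \<Longrightarrow> True \<in> set D \<Longrightarrow> hd (area_aux u r (False # D)) < u - r"
proof (induction D arbitrary: r)
  case Nil then show ?case by simp
next
  case (Cons s D)
  have C1: "Cond u (Suc r) (s # D)" using Cons.prems Cond_F by blast
  then have le: "Suc r \<le> u" using Cond_le by blast
  show ?case
  proof (cases s)
    case True
    then show ?thesis using le by simp
  next
    case False
    then have "True \<in> set D" using Cons.prems by simp
    moreover have "Cond u (Suc r) (False # D)" using C1 False by simp
    ultimately have "hd (area_aux u (Suc r) (False # D)) < u - Suc r" using Cons.IH by blast
    then show ?thesis using False by simp
  qed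
qed

lemma Cond_allF: "Cond u r D \<Longrightarrow> True \<notin> set D \<Longrightarrow> u = r + length D"
proof -
  assume "Cond u r D" "True \<notin> set D"
  then have "count_list D True = 0" "count_list D False = length D"
    using count_list_0_iff length_bool[of D] by auto
  then show ?thesis using \<open>Cond u r D\<close> unfolding Cond_def by simp
qed

lemma area_aux_inj: "Cond u r D1 \<Longrightarrow> Cond u r D2 \<Longrightarrow> area_aux u r D1 = area_aux u r D2 \<Longrightarrow> D1 = D2"
proof (induction D1 arbitrary: u r D2)
  case Nil
  then have "True \<notin> set D2" using area_aux_nil_iff by (metis area_aux.simps(1))
  then have "u = r + length D2" using Cond_allF Nil by blast
  moreover have "u = r" using Cond_allF[OF Nil(1)] by simp
  ultimately show ?case by simp
next
  case (Cons s D1)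
  show ?case
  proof (cases "D2 = []")
    case True
    note Nil = True
    then have "True \<notin> set (s # D1)" using Cons.prems area_aux_nil_iff by (metis area_aux.simps(1))
    then have "u = r + length (s # D1)" using Cond_allF Cons.prems by blast
    moreover have "u = r" using Cond_allF[OF Cons.prems(2)] Nil by simp
    ultimately show ?thesis by simp
  next
    case False
    then obtain t D2' where Cons2: "D2 = t # D2'" by (cases D2) auto
    show ?thesis
    proof (cases s; cases t)
      assume s: "s" and t: "t"
      have "Cond (Suc u) r D1" "Cond (Suc u) r D2'" using Cons.prems Cons2 s t Cond_T by auto
      then show ?thesis using Cons.IH[of "Suc u" r D2'] Cons.prems Cons2 s t by simp
    next
      assume s: "\<not> s" and t: "\<not> t"
      have "Cond u (Suc r) D1" "Cond u (Suc r) D2'" using Cons.prems Cons2 s t Cond_F by auto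
      then show ?thesis using Cons.IH[of u "Suc r" D2'] Cons.prems Cons2 s t by simp
    next
      assume s: "s" and t: "\<not> t"
      have "area_aux u r (s # D1) \<noteq> []" using s by simp
      then have ne: "area_aux u r D2 \<noteq> []" using Cons.prems(3) by simp
      then have "True \<in> set D2'" using Cons2 t area_aux_nil_iff by auto
      then have "hd (area_aux u r D2) < u - r" using area_aux_hd_F Cons.prems Cons2 t by auto
      moreover have "hd (area_aux u r (s # D1)) = u - r" using s by simp
      ultimately show ?thesis using Cons.prems by simp
    next
      assume s: "\<not> s" and t: "t"
      have ne: "area_aux u r (s # D1) \<noteq> []" using Cons.prems t Cons2 by simp
      then have "True \<in> set D1" using s area_aux_nil_iff by auto
      moreover have "Cond u r (False # D1)" using Cons.prems s by simp
      ultimately have "hd (area_aux u r (False # D1)) < u - r" using area_aux_hd_F by blast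
      then have "hd (area_aux u r (s # D1)) < u - r" using s by simp
      moreover have "hd (area_aux u r D2) = u - r" using t Cons2 by simp
      ultimately show ?thesis using Cons.prems by simp
    qed
  qed
qed

lemma dyck_Cond: "dyck_path n D \<Longrightarrow> Cond 0 0 D"
  unfolding dyck_path_def Cond_def using length_bool[of D] by auto

lemma area_inj: "dyck_path n D1 \<Longrightarrow> dyck_path n D2 \<Longrightarrow> area_seq D1 = area_seq D2 \<Longrightarrow> D1 = D2"
  unfolding area_seq_def using area_aux_inj dyck_Cond by blast

lemma length_area_aux: "length (area_aux u r D) = count_list D True"
  by (induction u r D rule: area_aux.induct) auto

lemma area_aux_stepok: "(\<forall>k\<le>length D. r + count_list (take k D) False \<le> u + count_list (take k D) True) \<Longrightarrow>
   stepok (area_aux u r D) \<and> (\<forall>x xs. area_aux u r D = x # xs \<longrightarrow> x \<le> u - r)"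
proof (induction D arbitrary: u r)
  case Nil then show ?case by simp
next
  case (Cons s D)
  have r: "r \<le> u" using Cons.prems[rule_format, of 0] by simp
  show ?case
  proof (cases s)
    case True
    have "\<forall>k\<le>length D. r + count_list (take k D) False \<le> Suc u + count_list (take k D) True"
    proof (intro allI impI)
      fix k assume "k \<le> length D"
      then show "r + count_list (take k D) False \<le> Suc u + count_list (take k D) True"
        using Cons.prems[rule_format, of "Suc k"] True by simp
    qed
    from Cons.IH[OF this] r True show ?thesis
      by (cases "area_aux (Suc u) r D") auto
  next
    case False
    have "\<forall>k\<le>length D. Suc r + count_list (take k D) False \<le> u + count_list (take k D) True"
    proof (intro allI impI)
      fix k assume "k \<le> length D"
      then show "Suc r + count_list (take k D) False \<le> u + count_list (take k D) True"
        using Cons.prems[rule_format, of "Suc k"] False by simp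
    qed
    from Cons.IH[OF this] False show ?thesis by auto
  qed
qed

lemma valid_area: "dyck_path n D \<Longrightarrow> valid (area_seq D) \<and> length (area_seq D) = n"
proof -
  assume d: "dyck_path n D"
  have len: "length (area_seq D) = n" using d unfolding dyck_path_def area_seq_def
    by (simp add: length_area_aux)
  have "stepok (area_aux 0 0 D) \<and> (\<forall>x xs. area_aux 0 0 D = x # xs \<longrightarrow> x \<le> 0 - 0)"
    using area_aux_stepok[of D 0 0] d unfolding dyck_path_def by auto
  then have "valid (area_seq D)" unfolding valid_def area_seq_def
    by (cases "area_aux 0 0 D") auto
  with len show ?thesis by simp
qed


definition wordk :: "nat \<Rightarrow> nat list \<Rightarrow> bool list" where
  "wordk k w = map (\<lambda>a. a = k) (filter (\<lambda>a. a = k \<or> Suc a = k) w)"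

definition Sk :: "nat \<Rightarrow> bool list \<Rightarrow> bool list" where
  "Sk k D = map (\<lambda>t. \<not> D ! t) (filter (\<lambda>t. diag_after D t = int k) [0..<length D])"

lemma area_aux_snoc: "area_aux u r (D @ [s]) =
   area_aux u r D @ (if s then [u + count_list D True - (r + count_list D False)] else [])"
  by (induction u r D rule: area_aux.induct) auto

lemma wordk_append: "wordk k (xs @ ys) = wordk k xs @ wordk k ys"
  by (simp add: wordk_def)

lemma wordk_single: "wordk k [a] = (if a = k \<or> Suc a = k then [a = k] else [])"
  by (simp add: wordk_def)

lemma Sk_snoc: "Sk k (D @ [s]) = Sk k D @
   (if int (count_list (D @ [s]) True) - int (count_list (D @ [s]) False) = int k then [\<not> s] else [])"
proof -
  have "filter (\<lambda>t. diag_after (D @ [s]) t = int k) [0..<length D] = filter (\<lambda>t. diag_after D t = int k) [0..<length D]"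
    by (rule filter_cong) (auto simp: diag_after_def)
  moreover have "map (\<lambda>t. \<not> (D @ [s]) ! t) (filter (\<lambda>t. diag_after D t = int k) [0..<length D])
      = map (\<lambda>t. \<not> D ! t) (filter (\<lambda>t. diag_after D t = int k) [0..<length D])"
    by (rule map_cong) (auto simp: nth_append)
  moreover have "diag_after (D @ [s]) (length D) = int (count_list (D @ [s]) True) - int (count_list (D @ [s]) False)"
    by (simp add: diag_after_def)
  ultimately show ?thesis unfolding Sk_def by simp
qed

lemma prefix_take_snoc: "(\<forall>k \<le> length (P @ [s]). count_list (take k (P @ [s])) False \<le> count_list (take k (P @ [s])) True)
  \<Longrightarrow> (\<forall>k \<le> length P. count_list (take k P) False \<le> count_list (take k P) True)"
  by (metis le_SucI length_append_singleton take_all_iff take_append take_eq_Nil2 append_Nil2 diff_is_0_eq)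

lemma word_Sk_inv: "(\<forall>k \<le> length P. count_list (take k P) False \<le> count_list (take k P) True) \<Longrightarrow>
  wordk k (area_seq P) = Sk k P @ (if Suc k \<le> count_list P True - count_list P False then [True] else [])"
proof (induction P arbitrary: k rule: rev_induct)
  case Nil
  then show ?case by (simp add: wordk_def Sk_def area_seq_def)
next
  case (snoc s P)
  have pre: "\<forall>k \<le> length P. count_list (take k P) False \<le> count_list (take k P) True"
    using prefix_take_snoc snoc.prems by blast
  have full: "count_list (P @ [s]) False \<le> count_list (P @ [s]) True"
    using snoc.prems[rule_format, of "length (P @ [s])"] by simp
  have fullP: "count_list P False \<le> count_list P True"
    using pre[rule_format, of "length P"] by simp
  define h where "h = count_list P True - count_list P False"
  have IH: "wordk k (area_seq P) = Sk k P @ (if Suc k \<le> h then [True] else [])"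
    using snoc.IH pre h_def by blast
  show ?case
  proof (cases s)
    case True
    have a: "area_seq (P @ [s]) = area_seq P @ [h]"
      using True by (simp add: area_seq_def area_aux_snoc h_def)
    have i: "int (count_list (P @ [s]) True) - int (count_list (P @ [s]) False) = int (Suc h)"
      using True fullP by (simp add: h_def)
    have h2: "count_list (P @ [s]) True - count_list (P @ [s]) False = Suc h"
      using True fullP by (simp add: h_def)
    show ?thesis
      unfolding a wordk_append wordk_single IH Sk_snoc i h2
      using True by auto
  next
    case False
    have a: "area_seq (P @ [s]) = area_seq P"
      using False by (simp add: area_seq_def area_aux_snoc)
    have hpos: "1 \<le> h" using full False by (simp add: h_def)
    have i: "int (count_list (P @ [s]) True) - int (count_list (P @ [s]) False) = int (h - 1)"
      using False full hpos by (simp add: h_def)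
    have h2: "count_list (P @ [s]) True - count_list (P @ [s]) False = h - 1"
      using False by (simp add: h_def)
    show ?thesis
      unfolding a IH Sk_snoc i h2
      using False hpos by auto
  qed
qed

lemma upto_nat: "[0..int L] = map int [0..<Suc L]"
proof (induction L)
  case 0 then show ?case by simp
next
  case (Suc L)
  have "[0..int (Suc L)] = [0..int (Suc L) - 1] @ [int (Suc L)]" by (rule upto_rec2) simp
  also have "int (Suc L) - 1 = int L" by simp
  finally show ?case using Suc by simp
qed

lemma zeta_formula: "dyck_path n D \<Longrightarrow>
  zeta D = concat (map (\<lambda>k. wordk k (area_seq D)) [0..<Suc (length D)])"
proof -
  assume d: "dyck_path n D"
  have pre: "\<forall>k \<le> length D. count_list (take k D) False \<le> count_list (take k D) True"
    using d by (simp add: dyck_path_def)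
  have eq: "count_list D True - count_list D False = 0"
    using d length_bool[of D] by (simp add: dyck_path_def)
  have W: "wordk k (area_seq D) = Sk k D" for k
    using word_Sk_inv[OF pre, of k] eq by simp
  have "zeta D = concat (map (\<lambda>k. Sk k D) [0..<Suc (length D)])"
    unfolding zeta_def Sk_def upto_nat map_concat by (simp add: comp_def)
  then show ?thesis using W by simp
qed


fun chainP :: "(nat \<Rightarrow> nat \<Rightarrow> bool) \<Rightarrow> nat \<Rightarrow> nat \<Rightarrow> nat \<Rightarrow> bool" where
  "chainP S N 0 v = (v \<in> {1..N})"
| "chainP S N (Suc k) v = (v \<in> {1..N} \<and> (\<exists>u\<in>{1..N}. S u v \<and> chainP S N k u))"

definition isoR :: "nat \<Rightarrow> (nat \<Rightarrow> nat) \<Rightarrow> (nat \<Rightarrow> nat \<Rightarrow> bool) \<Rightarrow> (nat \<Rightarrow> nat \<Rightarrow> bool) \<Rightarrow> bool" where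
  "isoR N f R S \<longleftrightarrow> bij_betw f {1..N} {1..N} \<and> (\<forall>i\<in>{1..N}. \<forall>j\<in>{1..N}. R i j \<longleftrightarrow> S (f i) (f j))"

lemma chain_iso: "isoR N f R S \<Longrightarrow> v \<in> {1..N} \<Longrightarrow> chainP R N k v \<longleftrightarrow> chainP S N k (f v)"
proof (induction k arbitrary: v)
  case 0
  have "f v \<in> {1..N}" using bij_betw_apply[of f "{1..N}" "{1..N}" v] 0 unfolding isoR_def by blast
  then show ?case using 0 by simp
next
  case (Suc k)
  have iso: "isoR N f R S" by (rule Suc.prems(1))
  have bij: "bij_betw f {1..N} {1..N}" using iso unfolding isoR_def by blast
  have rel: "\<And>i j. i\<in>{1..N} \<Longrightarrow> j\<in>{1..N} \<Longrightarrow> R i j \<longleftrightarrow> S (f i) (f j)"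
    using iso unfolding isoR_def by blast
  have fv: "f v \<in> {1..N}" using bij_betw_apply[OF bij Suc.prems(2)] .
  show ?case
  proof
    assume "chainP R N (Suc k) v"
    then obtain u where u: "u \<in> {1..N}" "R u v" "chainP R N k u" by auto
    have fu: "f u \<in> {1..N}" using bij_betw_apply[OF bij u(1)] .
    have "S (f u) (f v)" using rel[OF u(1) Suc.prems(2)] u(2) by simp
    moreover have "chainP S N k (f u)" using Suc.IH[OF Suc.prems(1) u(1)] u(3) by simp
    ultimately show "chainP S N (Suc k) (f v)" using fv fu by auto
  next
    assume "chainP S N (Suc k) (f v)"
    then obtain u' where u': "u' \<in> {1..N}" "S u' (f v)" "chainP S N k u'" by auto
    have "u' \<in> f ` {1..N}" using bij u'(1) unfolding bij_betw_def by simp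
    then obtain u where u: "u \<in> {1..N}" "f u = u'" by blast
    have "R u v" using rel[OF u(1) Suc.prems(2)] u' u by simp
    moreover have "chainP R N k u" using Suc.IH[OF Suc.prems(1) u(1)] u' u by simp
    ultimately show "chainP R N (Suc k) v" using u Suc.prems by auto
  qed
qed

lemma exists_prev: "valid w \<Longrightarrow> i < length w \<Longrightarrow> Suc m \<le> w ! i \<Longrightarrow> \<exists>i' < i. w ! i' = m"
proof (induction i)
  case 0
  then show ?case by (auto simp: valid_nth)
next
  case (Suc i)
  have "w ! Suc i \<le> Suc (w ! i)" using Suc.prems by (auto simp: valid_nth)
  then have "m \<le> w ! i" using Suc.prems by simp
  then show ?case
  proof (cases "w ! i = m")
    case True then show ?thesis by auto
  next
    case False
    then have "Suc m \<le> w ! i" using \<open>m \<le> w ! i\<close> by simp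
    then obtain i' where "i' < i" "w ! i' = m" using Suc by auto
    then show ?thesis using less_SucI by blast
  qed
qed

lemma Pw_lt: "Pw w i j \<Longrightarrow> w ! (i - 1) < w ! (j - 1)"
  unfolding Pw_def by auto

lemma chain_Pw: "valid w \<Longrightarrow> length w = N \<Longrightarrow> j \<in> {1..N} \<Longrightarrow> chainP (Pw w) N k j \<longleftrightarrow> k \<le> w ! (j - 1)"
proof (induction k arbitrary: j)
  case 0 then show ?case by simp
next
  case (Suc k)
  show ?case
  proof
    assume "chainP (Pw w) N (Suc k) j"
    then obtain u where "u \<in> {1..N}" "Pw w u j" "chainP (Pw w) N k u" by auto
    then show "Suc k \<le> w ! (j - 1)" using Suc.IH[of u] Suc.prems Pw_lt[of w u j] by auto
  next
    assume H: "Suc k \<le> w ! (j - 1)"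
    have jl: "j - 1 < length w" using Suc.prems by auto
    obtain i' where i': "i' < j - 1" "w ! i' = w ! (j - 1) - 1"
      using exists_prev[OF Suc.prems(1) jl, of "w ! (j - 1) - 1"] H by auto
    have "Pw w (Suc i') j" unfolding Pw_def using i' H by auto
    moreover have "chainP (Pw w) N k (Suc i')" using Suc.IH[of "Suc i'"] Suc.prems i' H by auto
    ultimately show "chainP (Pw w) N (Suc k) j" using Suc.prems i' by auto
  qed
qed

lemma iso_values: "valid w1 \<Longrightarrow> valid w2 \<Longrightarrow> length w1 = N \<Longrightarrow> length w2 = N \<Longrightarrow>
   isoR N h (Pw w1) (Pw w2) \<Longrightarrow> j \<in> {1..N} \<Longrightarrow> w2 ! (h j - 1) = w1 ! (j - 1)"
proof -
  assume a: "valid w1" "valid w2" "length w1 = N" "length w2 = N" "isoR N h (Pw w1) (Pw w2)" "j \<in> {1..N}"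
  have hj: "h j \<in> {1..N}" using a(5,6) unfolding isoR_def bij_betw_def by auto
  have "chainP (Pw w1) N k j \<longleftrightarrow> chainP (Pw w2) N k (h j)" for k
    using chain_iso a by blast
  then have "k \<le> w1 ! (j - 1) \<longleftrightarrow> k \<le> w2 ! (h j - 1)" for k
    using chain_Pw a hj by blast
  then show ?thesis by (meson le_antisym order_refl)
qed

definition cb :: "nat list \<Rightarrow> nat \<Rightarrow> nat" where
  "cb w q = length (filter (\<lambda>a. Suc a = w ! q) (take q w))"

lemma card_filter_Suc: "card {i \<in> {1..length w}. P (w ! (i - 1))} = length (filter P w)"
proof -
  have "{i \<in> {1..length w}. P (w ! (i - 1))} = Suc ` {i. i < length w \<and> P (w ! i)}"
  proof
    show "{i \<in> {1..length w}. P (w ! (i - 1))} \<subseteq> Suc ` {i. i < length w \<and> P (w ! i)}"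
    proof
      fix i assume "i \<in> {i \<in> {1..length w}. P (w ! (i - 1))}"
      then have "i = Suc (i - 1)" "i - 1 \<in> {i. i < length w \<and> P (w ! i)}" by auto
      then show "i \<in> Suc ` {i. i < length w \<and> P (w ! i)}" by (metis imageI)
    qed
  qed auto
  then show ?thesis by (simp add: card_image length_filter_conv_card)
qed

lemma down_card: "length w = N \<Longrightarrow> j \<in> {1..N} \<Longrightarrow>
  card {i \<in> {1..N}. Pw w i j} = length (filter (\<lambda>a. a + 2 \<le> w ! (j - 1)) w) + cb w (j - 1)"
proof -
  assume a: "length w = N" "j \<in> {1..N}"
  define A where "A = {i \<in> {1..N}. w ! (i - 1) + 2 \<le> w ! (j - 1)}"
  define B where "B = {i \<in> {1..N}. i < j \<and> Suc (w ! (i - 1)) = w ! (j - 1)}"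
  have "{i \<in> {1..N}. Pw w i j} = A \<union> B" unfolding A_def B_def Pw_def by auto
  moreover have "A \<inter> B = {}" unfolding A_def B_def by auto
  moreover have "card A = length (filter (\<lambda>a. a + 2 \<le> w ! (j - 1)) w)"
    unfolding A_def using card_filter_Suc[where P="\<lambda>a. a + 2 \<le> w ! (j - 1)" and w=w] a by simp
  moreover have "card B = cb w (j - 1)"
  proof -
    have "B = {i \<in> {1..length (take (j - 1) w)}. Suc (take (j - 1) w ! (i - 1)) = w ! (j - 1)}"
      unfolding B_def using a by auto
    then show ?thesis unfolding cb_def
      using card_filter_Suc[where P="\<lambda>a. Suc a = w ! (j - 1)" and w="take (j - 1) w"] by simp
  qed
  ultimately show ?thesis by (simp add: card_Un_disjoint A_def B_def)
qed

lemma iso_card: "isoR N f R S \<Longrightarrow> v \<in> {1..N} \<Longrightarrow> card {i \<in> {1..N}. R i v} = card {i \<in> {1..N}. S i (f v)}"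
proof -
  assume a: "isoR N f R S" "v \<in> {1..N}"
  have bij: "bij_betw f {1..N} {1..N}" and rel: "\<forall>i\<in>{1..N}. \<forall>j\<in>{1..N}. R i j \<longleftrightarrow> S (f i) (f j)"
    using a unfolding isoR_def by auto
  have "f ` {i \<in> {1..N}. R i v} = {i \<in> {1..N}. S i (f v)}"
  proof
    show "f ` {i \<in> {1..N}. R i v} \<subseteq> {i \<in> {1..N}. S i (f v)}"
      using rel a(2) bij_betw_apply[OF bij] by auto
  next
    show "{i \<in> {1..N}. S i (f v)} \<subseteq> f ` {i \<in> {1..N}. R i v}"
    proof
      fix i assume i: "i \<in> {i \<in> {1..N}. S i (f v)}"
      have "i \<in> f ` {1..N}" using bij i unfolding bij_betw_def by simp
      then obtain u where "u \<in> {1..N}" "f u = i" by blast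
      then show "i \<in> f ` {i \<in> {1..N}. R i v}" using rel a(2) i by auto
    qed
  qed
  moreover have "inj_on f {i \<in> {1..N}. R i v}"
    using bij unfolding bij_betw_def by (auto intro: inj_on_subset)
  ultimately show ?thesis using card_image by fastforce
qed


definition Gm :: "nat list \<Rightarrow> (nat \<times> nat) multiset" where
  "Gm w = mset (map (\<lambda>q. (w ! q, cb w q)) [0..<length w])"

lemma mset_nth: "mset w = image_mset (nth w) (mset_set {0..<length w})"
proof -
  have "w = map (nth w) [0..<length w]" by (simp add: map_nth)
  then have "mset w = mset (map (nth w) [0..<length w])" by simp
  also have "\<dots> = image_mset (nth w) (mset_set {0..<length w})" by simp
  finally show ?thesis .
qed

lemma perm_mset: "bij_betw \<sigma> A A \<Longrightarrow> image_mset (g \<circ> \<sigma>) (mset_set A) = image_mset g (mset_set A)"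
proof -
  assume b: "bij_betw \<sigma> A A"
  have "image_mset (g \<circ> \<sigma>) (mset_set A) = image_mset g (image_mset \<sigma> (mset_set A))"
    by (simp add: multiset.map_comp)
  also have "image_mset \<sigma> (mset_set A) = mset_set (\<sigma> ` A)"
    using b by (simp add: bij_betw_def image_mset_mset_set)
  also have "\<sigma> ` A = A" using b by (simp add: bij_betw_def)
  finally show ?thesis .
qed

lemma sigma_bij:
  assumes "bij_betw h {1..N} {1..N}"
  shows "bij_betw (\<lambda>q. h (Suc q) - 1) {0..<N} {0..<N}"
proof -
  have hs: "\<And>q. q < N \<Longrightarrow> h (Suc q) \<in> {1..N}"
    using assms bij_betw_apply by fastforce
  have inj: "inj_on (\<lambda>q. h (Suc q) - 1) {0..<N}"
  proof (rule inj_onI)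
    fix a b assume ab: "a \<in> {0..<N}" "b \<in> {0..<N}" "h (Suc a) - 1 = h (Suc b) - 1"
    then have "h (Suc a) = h (Suc b)" using hs[of a] hs[of b] by auto
    moreover have "Suc a \<in> {1..N}" "Suc b \<in> {1..N}" using ab by auto
    ultimately have "Suc a = Suc b" using assms unfolding bij_betw_def inj_on_def by blast
    then show "a = b" by simp
  qed
  have sub: "(\<lambda>q. h (Suc q) - 1) ` {0..<N} \<subseteq> {0..<N}"
    using hs by fastforce
  have "card ((\<lambda>q. h (Suc q) - 1) ` {0..<N}) = card {0..<N}"
    using inj card_image by blast
  then have "(\<lambda>q. h (Suc q) - 1) ` {0..<N} = {0..<N}"
    using sub card_subset_eq by blast
  then show ?thesis using inj unfolding bij_betw_def by simp
qed

lemma len_filter_mset: "length (filter P xs) = size (filter_mset P (mset xs))"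
  by (metis mset_filter size_mset)

lemma G_iso:
  assumes v1: "valid w1" and v2: "valid w2" and l1: "length w1 = N" and l2: "length w2 = N"
    and iso: "isoR N h (Pw w1) (Pw w2)"
  shows "Gm w1 = Gm w2"
proof -
  define \<sigma> where "\<sigma> = (\<lambda>q. h (Suc q) - 1)"
  have bh: "bij_betw h {1..N} {1..N}" using iso unfolding isoR_def by blast
  have bs: "bij_betw \<sigma> {0..<N} {0..<N}" unfolding \<sigma>_def using sigma_bij[OF bh] .
  have hs: "\<And>q. q < N \<Longrightarrow> h (Suc q) \<in> {1..N}"
    using bh bij_betw_apply by fastforce
  have val: "\<And>q. q < N \<Longrightarrow> w2 ! (\<sigma> q) = w1 ! q"
    unfolding \<sigma>_def using iso_values[OF v1 v2 l1 l2 iso] by force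
  have ms: "mset w1 = mset w2"
  proof -
    have "mset w2 = image_mset (nth w2) (mset_set {0..<N})" using mset_nth[of w2] l2 by simp
    also have "\<dots> = image_mset (nth w2 \<circ> \<sigma>) (mset_set {0..<N})" using perm_mset[OF bs, of "nth w2"] by simp
    also have "\<dots> = image_mset (nth w1) (mset_set {0..<N})"
      by (rule image_mset_cong) (simp add: val)
    also have "\<dots> = mset w1" using mset_nth[of w1] l1 by simp
    finally show ?thesis by simp
  qed
  have cbq: "\<And>q. q < N \<Longrightarrow> cb w2 (\<sigma> q) = cb w1 q"
  proof -
    fix q assume q: "q < N"
    have sq: "Suc q \<in> {1..N}" using q by simp
    have c: "card {i \<in> {1..N}. Pw w1 i (Suc q)} = card {i \<in> {1..N}. Pw w2 i (h (Suc q))}"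
      using iso_card[OF iso sq] .
    have d1: "card {i \<in> {1..N}. Pw w1 i (Suc q)} = length (filter (\<lambda>a. a + 2 \<le> w1 ! q) w1) + cb w1 q"
      using down_card[OF l1 sq] by simp
    have d2: "card {i \<in> {1..N}. Pw w2 i (h (Suc q))} = length (filter (\<lambda>a. a + 2 \<le> w2 ! (\<sigma> q)) w2) + cb w2 (\<sigma> q)"
      using down_card[OF l2 hs[OF q]] unfolding \<sigma>_def by simp
    have "length (filter (\<lambda>a. a + 2 \<le> w1 ! q) w1) = length (filter (\<lambda>a. a + 2 \<le> w1 ! q) w2)"
      unfolding len_filter_mset ms ..
    then show "cb w2 (\<sigma> q) = cb w1 q" using c d1 d2 val[OF q] by simp
  qed
  have "Gm w2 = image_mset (\<lambda>q. (w2 ! q, cb w2 q)) (mset_set {0..<N})"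
    unfolding Gm_def using l2 by simp
  also have "\<dots> = image_mset ((\<lambda>q. (w2 ! q, cb w2 q)) \<circ> \<sigma>) (mset_set {0..<N})"
    using perm_mset[OF bs, of "\<lambda>q. (w2 ! q, cb w2 q)"] by simp
  also have "\<dots> = image_mset (\<lambda>q. (w1 ! q, cb w1 q)) (mset_set {0..<N})"
    by (rule image_mset_cong) (simp add: val cbq)
  also have "\<dots> = Gm w1" unfolding Gm_def using l1 by simp
  finally show ?thesis by simp
qed


definition del :: "nat \<Rightarrow> 'a list \<Rightarrow> 'a list" where
  "del p w = take p w @ drop (Suc p) w"

lemma length_del: "p < length w \<Longrightarrow> length (del p w) = length w - 1"
  by (simp add: del_def)

lemma nth_del: assumes p: "p < length w" and i: "i < length w - 1"
  shows "del p w ! i = (if i < p then w ! i else w ! Suc i)"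
proof -
  have lt: "length (take p w) = p" using p by simp
  show ?thesis
  proof (cases "i < p")
    case True
    then show ?thesis unfolding del_def using lt by (simp add: nth_append)
  next
    case False
    have L: "length (take p w) = p" using p by simp
    have "length (take p w) \<le> i" using False L by simp
    then have "del p w ! i = drop (Suc p) w ! (i - length (take p w))" unfolding del_def by (rule nth_append_right)
    also have "\<dots> = w ! Suc i" using False i p L by simp
    finally show ?thesis using False by simp
  qed
qed

lemma take_del: "take p (del p w) = take p w"
  by (simp add: del_def) arith

lemma drop_del: assumes "p < length w" shows "drop p (del p w) = drop (Suc p) w"
proof -
  have "length (take p w) = p" using assms by simp
  then show ?thesis unfolding del_def by (simp add: drop_append)
qed

lemma recon_del: "p < length w \<Longrightarrow> w = take p (del p w) @ w ! p # drop p (del p w)"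
  by (simp add: take_del drop_del id_take_nth_drop)

lemma mset_del: "p < length L \<Longrightarrow> mset (del p L) = mset L - {#L ! p#}"
proof -
  assume p: "p < length L"
  have "mset L = mset (take p L @ L ! p # drop (Suc p) L)"
    using id_take_nth_drop[OF p] by simp
  then show ?thesis by (simp add: del_def)
qed

definition mx :: "nat list \<Rightarrow> nat" where "mx w = Max (set w)"
definition lp :: "nat list \<Rightarrow> nat" where "lp w = Max {q. q < length w \<and> w ! q = mx w}"

lemma lp_props:
  assumes "w \<noteq> []"
  shows "lp w < length w" "w ! lp w = mx w" "\<And>q. lp w < q \<Longrightarrow> q < length w \<Longrightarrow> w ! q < mx w"
    "\<And>q. q < length w \<Longrightarrow> w ! q \<le> mx w"
proof -
  have M: "mx w \<in> set w" unfolding mx_def using assms by simp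
  have ge: "\<And>q. q < length w \<Longrightarrow> w ! q \<le> mx w" unfolding mx_def by simp
  then show "\<And>q. q < length w \<Longrightarrow> w ! q \<le> mx w" .
  have ne: "{q. q < length w \<and> w ! q = mx w} \<noteq> {}" using M by (auto simp: in_set_conv_nth)
  have fin: "finite {q. q < length w \<and> w ! q = mx w}" by simp
  have "lp w \<in> {q. q < length w \<and> w ! q = mx w}" unfolding lp_def using Max_in[OF fin ne] .
  then show "lp w < length w" "w ! lp w = mx w" by auto
  show "\<And>q. lp w < q \<Longrightarrow> q < length w \<Longrightarrow> w ! q < mx w"
  proof -
    fix q assume q: "lp w < q" "q < length w"
    have "w ! q \<noteq> mx w"
    proof
      assume "w ! q = mx w"
      then have "q \<le> lp w" unfolding lp_def using Max_ge[OF fin] q by auto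
      then show False using q by simp
    qed
    then show "w ! q < mx w" using ge[OF q(2)] by simp
  qed
qed

lemma filter_take_mono: "q \<le> p \<Longrightarrow> length (filter P (take q w)) \<le> length (filter P (take p w))"
proof -
  assume "q \<le> p"
  then have "take p w = take q w @ drop q (take p w)"
    by (metis append_take_drop_id min.absorb1 take_take)
  then have "length (filter P (take p w)) = length (filter P (take q w)) + length (filter P (drop q (take p w)))"
    by (metis filter_append length_append)
  then show ?thesis by simp
qed

definition CharG :: "(nat \<times> nat) multiset \<Rightarrow> nat \<Rightarrow> nat \<Rightarrow> bool" where
  "CharG G M C \<longleftrightarrow> (M, C) \<in># G \<and> (\<forall>x \<in># G. fst x < M \<or> (fst x = M \<and> snd x \<le> C))"

lemma Char_unique: "CharG G M1 C1 \<Longrightarrow> CharG G M2 C2 \<Longrightarrow> M1 = M2 \<and> C1 = C2"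
  unfolding CharG_def by fastforce

lemma set_Gm: "x \<in># Gm w \<longleftrightarrow> (\<exists>q < length w. x = (w ! q, cb w q))"
  unfolding Gm_def by auto

lemma Char_Gm: "w \<noteq> [] \<Longrightarrow> CharG (Gm w) (mx w) (cb w (lp w))"
  unfolding CharG_def set_Gm
proof (intro conjI ballI)
  assume ne: "w \<noteq> []"
  show "\<exists>q<length w. (mx w, cb w (lp w)) = (w ! q, cb w q)"
    using lp_props[OF ne] by auto
next
  fix x assume ne: "w \<noteq> []" and x: "x \<in># Gm w"
  then obtain q where q: "q < length w" "x = (w ! q, cb w q)" using set_Gm by blast
  show "fst x < mx w \<or> fst x = mx w \<and> snd x \<le> cb w (lp w)"
  proof (cases "w ! q = mx w")
    case True
    then have "\<not> lp w < q" using lp_props(3)[OF ne, of q] q by auto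
    then have "q \<le> lp w" by simp
    then have "cb w q \<le> cb w (lp w)" unfolding cb_def using True lp_props(2)[OF ne]
      by (simp add: filter_take_mono)
    then show ?thesis using q True by simp
  next
    case False
    then show ?thesis using q lp_props(4)[OF ne q(1)] by simp
  qed
qed

lemma Gl_del:
  assumes ne: "w \<noteq> []"
  shows "map (\<lambda>q. (del (lp w) w ! q, cb (del (lp w) w) q)) [0..<length (del (lp w) w)]
       = del (lp w) (map (\<lambda>q. (w ! q, cb w q)) [0..<length w])"
proof -
  define p where "p = lp w"
  have p: "p < length w" unfolding p_def using lp_props[OF ne] by simp
  have after: "\<And>q. p < q \<Longrightarrow> q < length w \<Longrightarrow> w ! q < mx w" unfolding p_def using lp_props[OF ne] by simp
  have wp: "w ! p = mx w" unfolding p_def using lp_props[OF ne] by simp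
  show ?thesis unfolding p_def[symmetric]
  proof (rule nth_equalityI)
    show "length (map (\<lambda>q. (del p w ! q, cb (del p w) q)) [0..<length (del p w)]) =
      length (del p (map (\<lambda>q. (w ! q, cb w q)) [0..<length w]))"
      using p by (simp add: length_del)
  next
    fix i assume i: "i < length (map (\<lambda>q. (del p w ! q, cb (del p w) q)) [0..<length (del p w)])"
    then have i': "i < length w - 1" using p by (simp add: length_del)
    have lhs: "map (\<lambda>q. (del p w ! q, cb (del p w) q)) [0..<length (del p w)] ! i = (del p w ! i, cb (del p w) i)"
      using i by simp
    have rhs: "del p (map (\<lambda>q. (w ! q, cb w q)) [0..<length w]) ! i =
       (if i < p then (w ! i, cb w i) else (w ! Suc i, cb w (Suc i)))"
      using nth_del[of p "map (\<lambda>q. (w ! q, cb w q)) [0..<length w]" i] p i' by auto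
    show "map (\<lambda>q. (del p w ! q, cb (del p w) q)) [0..<length (del p w)] ! i =
         del p (map (\<lambda>q. (w ! q, cb w q)) [0..<length w]) ! i"
    proof (cases "i < p")
      case True
      have "take i (del p w) = take i w" using True p by (auto simp: del_def)
      then show ?thesis unfolding lhs rhs using True nth_del[OF p i'] by (simp add: cb_def)
    next
      case False
      have di: "del p w ! i = w ! Suc i" using nth_del[OF p i'] False by simp
      have t1: "take i (del p w) = take p w @ take (i - p) (drop (Suc p) w)"
        using False p by (simp add: del_def take_append min_def)
      have t2: "take (Suc i) w = take p w @ w ! p # take (i - p) (drop (Suc p) w)"
      proof -
        have "take (Suc i) w = take (Suc i) (take p w @ w ! p # drop (Suc p) w)"
          using id_take_nth_drop[OF p] by simp
        also have "\<dots> = take p w @ take (Suc i - p) (w ! p # drop (Suc p) w)"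
          using p False by (simp add: take_append min_def)
        also have "Suc i - p = Suc (i - p)" using False by simp
        finally show ?thesis by simp
      qed
      have lt: "w ! Suc i < mx w" using after[of "Suc i"] False i' by simp
      have "cb (del p w) i = cb w (Suc i)"
        unfolding cb_def di t1 t2 using lt wp by simp
      then show ?thesis unfolding lhs rhs using False di by simp
    qed
  qed
qed

lemma Gm_del: "w \<noteq> [] \<Longrightarrow> Gm (del (lp w) w) = Gm w - {#(mx w, cb w (lp w))#}"
proof -
  assume ne: "w \<noteq> []"
  have p: "lp w < length w" using lp_props[OF ne] by simp
  define L where "L = map (\<lambda>q. (w ! q, cb w q)) [0..<length w]"
  have pL: "lp w < length L" using p by (simp add: L_def)
  have "Gm (del (lp w) w) = mset (del (lp w) L)"
    unfolding Gm_def L_def using Gl_del[OF ne] by simp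
  also have "\<dots> = mset L - {#L ! lp w#}"
    using mset_del[OF pL] .
  also have "L ! lp w = (mx w, cb w (lp w))"
    using p lp_props[OF ne] by (simp add: L_def)
  also have "mset L = Gm w" by (simp add: L_def Gm_def)
  finally show ?thesis .
qed

lemma valid_del: "valid w \<Longrightarrow> w \<noteq> [] \<Longrightarrow> valid (del (lp w) w)"
proof -
  assume v: "valid w" and ne: "w \<noteq> []"
  define p where "p = lp w"
  have p: "p < length w" unfolding p_def using lp_props[OF ne] by simp
  have after: "\<And>q. p < q \<Longrightarrow> q < length w \<Longrightarrow> w ! q < mx w" unfolding p_def using lp_props[OF ne] by simp
  have wp: "w ! p = mx w" unfolding p_def using lp_props[OF ne] by simp
  have ge: "\<And>q. q < length w \<Longrightarrow> w ! q \<le> mx w" using lp_props[OF ne] by simp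
  have vn: "\<And>i. i < length w \<Longrightarrow> w ! i \<le> (if i = 0 then 0 else Suc (w ! (i - 1)))"
    using v unfolding valid_nth by blast
  show ?thesis unfolding valid_nth p_def[symmetric]
  proof (intro allI impI)
    fix i assume i: "i < length (del p w)"
    then have i': "i < length w - 1" using p by (simp add: length_del)
    show "del p w ! i \<le> (if i = 0 then 0 else Suc (del p w ! (i - 1)))"
    proof (cases "i = 0")
      case True
      show ?thesis
      proof (cases "p = 0")
        case True
        then have "mx w = 0" using wp vn[of 0] p by simp
        then show ?thesis using nth_del[OF p i'] ge[of "Suc i"] i' \<open>i = 0\<close> True by simp
      next
        case False
        have "w ! 0 = 0" using vn[of 0] p ne by simp
        then show ?thesis using nth_del[OF p i'] \<open>i = 0\<close> False by simp
      qed
    next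
      case False
      have di1: "del p w ! (i - 1) = (if i - 1 < p then w ! (i - 1) else w ! i)"
        using nth_del[OF p, of "i - 1"] i' False by simp
      show ?thesis
      proof (cases "i < p")
        case True
        then show ?thesis using nth_del[OF p i'] di1 vn[of i] False p by simp
      next
        case ip: False
        show ?thesis
        proof (cases "i = p")
          case True
          have "w ! Suc p < mx w" using after[of "Suc p"] i' True by simp
          moreover have "mx w \<le> Suc (w ! (p - 1))" using vn[of p] wp p False True by simp
          ultimately show ?thesis using nth_del[OF p i'] di1 True False by simp
        next
          case False
          then have "p < i" using ip by simp
          then have "\<not> (i - 1 < p)" by simp
          then show ?thesis using nth_del[OF p i'] di1 vn[of "Suc i"] i' \<open>p < i\<close> by simp
        qed
      qed
    qed
  qed
qed

definition Qp :: "nat list \<Rightarrow> nat \<Rightarrow> nat \<Rightarrow> nat \<Rightarrow> bool" where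
  "Qp w0 M C p \<longleftrightarrow> p \<le> length w0 \<and> length (filter (\<lambda>a. Suc a = M) (take p w0)) = C \<and>
     (\<forall>q. p \<le> q \<longrightarrow> q < length w0 \<longrightarrow> w0 ! q < M) \<and> (0 < p \<longrightarrow> M \<le> Suc (w0 ! (p - 1)))"

lemma Qp_holds: "valid w \<Longrightarrow> w \<noteq> [] \<Longrightarrow> Qp (del (lp w) w) (mx w) (cb w (lp w)) (lp w)"
proof -
  assume v: "valid w" and ne: "w \<noteq> []"
  define p where "p = lp w"
  have p: "p < length w" unfolding p_def using lp_props[OF ne] by simp
  have after: "\<And>q. p < q \<Longrightarrow> q < length w \<Longrightarrow> w ! q < mx w" unfolding p_def using lp_props[OF ne] by simp
  have wp: "w ! p = mx w" unfolding p_def using lp_props[OF ne] by simp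
  have vn: "\<And>i. i < length w \<Longrightarrow> w ! i \<le> (if i = 0 then 0 else Suc (w ! (i - 1)))"
    using v unfolding valid_nth by blast
  show ?thesis unfolding p_def[symmetric] Qp_def
  proof (intro conjI allI impI)
    show "p \<le> length (del p w)" using p by (simp add: length_del)
    show "length (filter (\<lambda>a. Suc a = mx w) (take p (del p w))) = cb w p"
      unfolding take_del cb_def wp ..
    fix q assume "p \<le> q" "q < length (del p w)"
    then show "del p w ! q < mx w" using nth_del[OF p, of q] after[of "Suc q"] p by (simp add: length_del)
  next
    assume "0 < p"
    then show "mx w \<le> Suc (del p w ! (p - 1))" using nth_del[OF p, of "p - 1"] vn[of p] wp p by simp
  qed
qed

lemma filter_take_Suc: "q < length w \<Longrightarrow> length (filter P (take (Suc q) w)) = length (filter P (take q w)) + (if P (w ! q) then 1 else 0)"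
  by (simp add: take_Suc_conv_app_nth)

lemma Qp_unique_lt: "Qp w0 M C p1 \<Longrightarrow> Qp w0 M C p2 \<Longrightarrow> p1 < p2 \<Longrightarrow> False"
proof -
  assume q1: "Qp w0 M C p1" and q2: "Qp w0 M C p2" and lt: "p1 < p2"
  have l: "p2 - 1 < length w0" using q2 lt unfolding Qp_def by auto
  have "w0 ! (p2 - 1) < M" using q1 lt l unfolding Qp_def by auto
  moreover have "M \<le> Suc (w0 ! (p2 - 1))" using q2 lt unfolding Qp_def by auto
  ultimately have e: "Suc (w0 ! (p2 - 1)) = M" by simp
  have "length (filter (\<lambda>a. Suc a = M) (take p2 w0)) = length (filter (\<lambda>a. Suc a = M) (take (p2 - 1) w0)) + 1"
    using filter_take_Suc[OF l, of "\<lambda>a. Suc a = M"] e lt by simp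
  moreover have "length (filter (\<lambda>a. Suc a = M) (take p1 w0)) \<le> length (filter (\<lambda>a. Suc a = M) (take (p2 - 1) w0))"
    using filter_take_mono[of p1 "p2 - 1"] lt by (simp add: less_imp_le_nat le_diff_conv2)
  ultimately show False using q1 q2 unfolding Qp_def by simp
qed

lemma Qp_unique: "Qp w0 M C p1 \<Longrightarrow> Qp w0 M C p2 \<Longrightarrow> p1 = p2"
  using Qp_unique_lt by (metis linorder_neqE_nat)

lemma size_Gm: "size (Gm w) = length w"
  unfolding Gm_def by simp

lemma G_inj: "valid w1 \<Longrightarrow> valid w2 \<Longrightarrow> Gm w1 = Gm w2 \<Longrightarrow> w1 = w2"
proof (induction "length w1" arbitrary: w1 w2)
  case 0
  then have "length w2 = 0" using size_Gm by metis
  then show ?case using 0 by simp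
next
  case (Suc N)
  have l2: "length w2 = Suc N" using Suc.prems Suc.hyps size_Gm by metis
  have ne1: "w1 \<noteq> []" and ne2: "w2 \<noteq> []" using Suc.hyps l2 by auto
  have "mx w1 = mx w2 \<and> cb w1 (lp w1) = cb w2 (lp w2)"
    using Char_unique Char_Gm[OF ne1] Char_Gm[OF ne2] Suc.prems(3) by metis
  then obtain M C where MC: "mx w1 = M" "mx w2 = M" "cb w1 (lp w1) = C" "cb w2 (lp w2) = C" by blast
  have g: "Gm (del (lp w1) w1) = Gm (del (lp w2) w2)"
    using Gm_del[OF ne1] Gm_del[OF ne2] MC Suc.prems(3) by simp
  have len1: "length (del (lp w1) w1) = N" using length_del[OF lp_props(1)[OF ne1]] Suc.hyps(2) by simp
  have eq: "del (lp w1) w1 = del (lp w2) w2"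
    using Suc.hyps(1)[OF len1[symmetric] valid_del[OF Suc.prems(1) ne1] valid_del[OF Suc.prems(2) ne2] g] .
  have "lp w1 = lp w2"
    using Qp_unique Qp_holds[OF Suc.prems(1) ne1] Qp_holds[OF Suc.prems(2) ne2] eq MC by metis
  then show ?case
    using recon_del[OF lp_props(1)[OF ne1]] recon_del[OF lp_props(1)[OF ne2]] eq
      lp_props(2)[OF ne1] lp_props(2)[OF ne2] MC by metis
qed


lemma unique_path:
  assumes d1: "dyck_path N D1" and d2: "dyck_path N D2"
    and i1: "poset_iso N (Pw (area_seq D1)) R" and i2: "poset_iso N (Pw (area_seq D2)) R"
  shows "D1 = D2"
proof -
  obtain f1 where f1: "bij_betw f1 {1..N} {1..N}" "\<forall>i\<in>{1..N}. \<forall>j\<in>{1..N}. Pw (area_seq D1) i j \<longleftrightarrow> R (f1 i) (f1 j)"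
    using i1 unfolding poset_iso_def by blast
  obtain f2 where f2: "bij_betw f2 {1..N} {1..N}" "\<forall>i\<in>{1..N}. \<forall>j\<in>{1..N}. Pw (area_seq D2) i j \<longleftrightarrow> R (f2 i) (f2 j)"
    using i2 unfolding poset_iso_def by blast
  define h where "h = inv_into {1..N} f2 \<circ> f1"
  have bi: "bij_betw (inv_into {1..N} f2) {1..N} {1..N}" using f2(1) by (rule bij_betw_inv_into)
  have bh: "bij_betw h {1..N} {1..N}" unfolding h_def using f1(1) bi by (rule bij_betw_trans)
  have hin: "\<And>i. i \<in> {1..N} \<Longrightarrow> h i \<in> {1..N}" using bij_betw_apply[OF bh] by blast
  have f2h: "\<And>i. i \<in> {1..N} \<Longrightarrow> f2 (h i) = f1 i"
  proof -
    fix i assume i: "i \<in> {1..N}"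
    have "f1 i \<in> {1..N}" using bij_betw_apply[OF f1(1) i] .
    then have "f1 i \<in> f2 ` {1..N}" using f2(1) unfolding bij_betw_def by simp
    then show "f2 (h i) = f1 i" unfolding h_def by (simp add: f_inv_into_f)
  qed
  have iso: "isoR N h (Pw (area_seq D1)) (Pw (area_seq D2))"
    unfolding isoR_def
  proof (intro conjI ballI)
    show "bij_betw h {1..N} {1..N}" by (rule bh)
    fix i j assume i: "i \<in> {1..N}" and j: "j \<in> {1..N}"
    have "Pw (area_seq D1) i j \<longleftrightarrow> R (f1 i) (f1 j)" using f1(2) i j by blast
    also have "\<dots> \<longleftrightarrow> R (f2 (h i)) (f2 (h j))" using f2h i j by simp
    also have "\<dots> \<longleftrightarrow> Pw (area_seq D2) (h i) (h j)" using f2(2) hin i j by blast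
    finally show "Pw (area_seq D1) i j \<longleftrightarrow> Pw (area_seq D2) (h i) (h j)" .
  qed
  have v1: "valid (area_seq D1)" "length (area_seq D1) = N" using valid_area[OF d1] by auto
  have v2: "valid (area_seq D2)" "length (area_seq D2) = N" using valid_area[OF d2] by auto
  have "Gm (area_seq D1) = Gm (area_seq D2)" using G_iso[OF v1(1) v2(1) v1(2) v2(2) iso] .
  then have "area_seq D1 = area_seq D2" using G_inj v1 v2 by blast
  then show ?thesis using area_inj d1 d2 by blast
qed

lemma pmap_eq:
  assumes v: "valid w" and l: "length w = N" and iso: "poset_iso N (Pw w) R"
  shows "pmap N R = pf w"
  unfolding pmap_def
proof (rule the_equality)
  show "dyck_path N (pf w) \<and> poset_iso N (Pw (area_seq (pf w))) R"
    using dyck_pf[OF v] area_pf[OF v] iso l by simp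
next
  fix D assume "dyck_path N D \<and> poset_iso N (Pw (area_seq D)) R"
  then show "D = pf w"
    using unique_path[of N D "pf w" R] dyck_pf[OF v] area_pf[OF v] iso l by auto
qed

lemma isoR_poset_iso:
  assumes "isoR N f R S"
  shows "poset_iso N S R"
proof -
  have b: "bij_betw f {1..N} {1..N}" and rel: "\<forall>i\<in>{1..N}. \<forall>j\<in>{1..N}. R i j \<longleftrightarrow> S (f i) (f j)"
    using assms unfolding isoR_def by auto
  define g where "g = inv_into {1..N} f"
  have bg: "bij_betw g {1..N} {1..N}" unfolding g_def using b by (rule bij_betw_inv_into)
  have gin: "\<And>i. i \<in> {1..N} \<Longrightarrow> g i \<in> {1..N}" using bij_betw_apply[OF bg] by blast
  have fg: "\<And>i. i \<in> {1..N} \<Longrightarrow> f (g i) = i"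
    unfolding g_def using b by (simp add: bij_betw_def f_inv_into_f)
  show ?thesis unfolding poset_iso_def
  proof (intro exI conjI ballI)
    show "bij_betw g {1..N} {1..N}" by (rule bg)
    fix i j assume i: "i \<in> {1..N}" and j: "j \<in> {1..N}"
    have "R (g i) (g j) \<longleftrightarrow> S (f (g i)) (f (g j))" using rel gin i j by blast
    then show "S i j \<longleftrightarrow> R (g i) (g j)" using fg i j by simp
  qed
qed


definition kk :: "(nat \<Rightarrow> real) \<Rightarrow> nat \<Rightarrow> nat" where
  "kk x j = card {i \<in> {1..<j}. uio_prec x i j}"

abbreviation lvl :: "(nat \<Rightarrow> real) \<Rightarrow> nat \<Rightarrow> nat" where
  "lvl x j \<equiv> level (uio_prec x) j"

lemma se_le: "sorted_endpoints x M \<Longrightarrow> 1 \<le> i \<Longrightarrow> i \<le> j \<Longrightarrow> j \<le> M \<Longrightarrow> x i \<le> x j"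
  unfolding sorted_endpoints_def by blast

lemma se_mono_N: "sorted_endpoints x M \<Longrightarrow> N \<le> M \<Longrightarrow> sorted_endpoints x N"
  unfolding sorted_endpoints_def by auto

lemma prec_lt: "sorted_endpoints x M \<Longrightarrow> i \<in> {1..M} \<Longrightarrow> j \<in> {1..M} \<Longrightarrow> uio_prec x i j \<Longrightarrow> i < j"
proof (rule ccontr)
  assume se: "sorted_endpoints x M" and i: "i \<in> {1..M}" and j: "j \<in> {1..M}" and p: "uio_prec x i j" and n: "\<not> i < j"
  have "x j \<le> x i" using se_le[OF se, of j i] i j n by auto
  then show False using p unfolding uio_prec_def by simp
qed

lemma prec_down: "sorted_endpoints x M \<Longrightarrow> 1 \<le> i' \<Longrightarrow> i' \<le> i \<Longrightarrow> i \<le> M \<Longrightarrow> uio_prec x i j \<Longrightarrow> uio_prec x i' j"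
  using se_le[of x M i' i] unfolding uio_prec_def by fastforce

lemma down_set:
  assumes se: "sorted_endpoints x M" and j: "j \<in> {1..M}"
  shows "{i \<in> {1..<j}. uio_prec x i j} = {1..kk x j}"
proof (cases "{i \<in> {1..<j}. uio_prec x i j} = {}")
  case True
  then show ?thesis unfolding kk_def by simp
next
  case False
  define D where "D = {i \<in> {1..<j}. uio_prec x i j}"
  have fin: "finite D" unfolding D_def by simp
  define K where "K = Max D"
  have KD: "K \<in> D" unfolding K_def using Max_in[OF fin] False D_def by simp
  have "D = {1..K}"
  proof
    show "D \<subseteq> {1..K}" using Max_ge[OF fin] unfolding K_def D_def by auto
    show "{1..K} \<subseteq> D"
    proof
      fix i assume i: "i \<in> {1..K}"
      have "uio_prec x K j" "K < j" "1 \<le> K" using KD unfolding D_def by auto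
      then have "uio_prec x i j" using prec_down[OF se, of i K j] i j by auto
      then show "i \<in> D" unfolding D_def using i \<open>K < j\<close> by auto
    qed
  qed
  then show ?thesis unfolding kk_def D_def[symmetric] by simp
qed

lemma kk_lt: "sorted_endpoints x M \<Longrightarrow> j \<in> {1..M} \<Longrightarrow> kk x j < j"
proof -
  assume se: "sorted_endpoints x M" and j: "j \<in> {1..M}"
  have "card {i \<in> {1..<j}. uio_prec x i j} \<le> card {1..<j}" by (rule card_mono) auto
  then have "kk x j \<le> j - 1" unfolding kk_def by simp
  then show ?thesis using j by (simp add: le_diff_conv2)
qed

lemma kk_iff: "sorted_endpoints x M \<Longrightarrow> i \<in> {1..M} \<Longrightarrow> j \<in> {1..M} \<Longrightarrow> uio_prec x i j \<longleftrightarrow> i \<le> kk x j"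
proof -
  assume se: "sorted_endpoints x M" and i: "i \<in> {1..M}" and j: "j \<in> {1..M}"
  have "uio_prec x i j \<longleftrightarrow> i \<in> {i \<in> {1..<j}. uio_prec x i j}" using prec_lt[OF se i j] i by auto
  also have "\<dots> \<longleftrightarrow> i \<le> kk x j" using down_set[OF se j] i by auto
  finally show ?thesis .
qed

lemma kk_mono: "sorted_endpoints x M \<Longrightarrow> 1 \<le> j \<Longrightarrow> j \<le> j' \<Longrightarrow> j' \<le> M \<Longrightarrow> kk x j \<le> kk x j'"
proof (cases "kk x j = 0")
  case False
  assume se: "sorted_endpoints x M" and jj: "1 \<le> j" "j \<le> j'" "j' \<le> M"
  have j: "j \<in> {1..M}" and j': "j' \<in> {1..M}" using jj by auto
  have kj: "kk x j \<in> {1..M}" using False kk_lt[OF se j] j by auto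
  have "uio_prec x (kk x j) j" using kk_iff[OF se kj j] by simp
  moreover have "x j \<le> x j'" using se_le[OF se] jj by blast
  ultimately have "uio_prec x (kk x j) j'" unfolding uio_prec_def by simp
  then show ?thesis using kk_iff[OF se kj j'] by simp
qed simp

lemma fold_max0: "fold max xs (0::nat) = Max (insert 0 (set xs))"
  using Max.set_eq_fold[of 0 xs] by simp

lemma level_Max: "sorted_endpoints x M \<Longrightarrow> j \<in> {1..M} \<Longrightarrow>
   lvl x j = Max (insert 0 ((\<lambda>i. Suc (lvl x i)) ` {1..kk x j}))"
proof -
  assume se: "sorted_endpoints x M" and j: "j \<in> {1..M}"
  have "lvl x j = fold max (map (\<lambda>i. Suc (lvl x i)) (filter (\<lambda>i. uio_prec x i j) [1..<j])) 0"
    by (rule level.simps)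
  also have "\<dots> = Max (insert 0 ((\<lambda>i. Suc (lvl x i)) ` {i \<in> {1..<j}. uio_prec x i j}))"
    unfolding fold_max0 by (simp add: image_image)
  also have "{i \<in> {1..<j}. uio_prec x i j} = {1..kk x j}" using down_set[OF se j] .
  finally show ?thesis .
qed

lemma level_mono: "sorted_endpoints x M \<Longrightarrow> 1 \<le> i \<Longrightarrow> i \<le> j \<Longrightarrow> j \<le> M \<Longrightarrow> lvl x i \<le> lvl x j"
proof -
  assume se: "sorted_endpoints x M" and ij: "1 \<le> i" "i \<le> j" "j \<le> M"
  have "kk x i \<le> kk x j" using kk_mono[OF se] ij by blast
  then have "insert 0 ((\<lambda>i. Suc (lvl x i)) ` {1..kk x i}) \<subseteq> insert 0 ((\<lambda>i. Suc (lvl x i)) ` {1..kk x j})"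
    by auto
  then have "Max (insert 0 ((\<lambda>i. Suc (lvl x i)) ` {1..kk x i})) \<le> Max (insert 0 ((\<lambda>i. Suc (lvl x i)) ` {1..kk x j}))"
    by (rule Max_mono) auto
  then show ?thesis using level_Max[OF se, of i] level_Max[OF se, of j] ij by simp
qed

lemma level_rec: "sorted_endpoints x M \<Longrightarrow> j \<in> {1..M} \<Longrightarrow>
   lvl x j = (if kk x j = 0 then 0 else Suc (lvl x (kk x j)))"
proof -
  assume se: "sorted_endpoints x M" and j: "j \<in> {1..M}"
  show ?thesis
  proof (cases "kk x j = 0")
    case True
    then show ?thesis using level_Max[OF se j] by simp
  next
    case False
    have kl: "kk x j < j" using kk_lt[OF se j] .
    have "Max (insert 0 ((\<lambda>i. Suc (lvl x i)) ` {1..kk x j})) = Suc (lvl x (kk x j))"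
    proof (rule Max_eqI)
      show "finite (insert 0 ((\<lambda>i. Suc (lvl x i)) ` {1..kk x j}))" by simp
      show "Suc (lvl x (kk x j)) \<in> insert 0 ((\<lambda>i. Suc (lvl x i)) ` {1..kk x j})" using False by auto
      fix y assume "y \<in> insert 0 ((\<lambda>i. Suc (lvl x i)) ` {1..kk x j})"
      then show "y \<le> Suc (lvl x (kk x j))"
        using level_mono[OF se, of _ "kk x j"] kl j by auto
    qed
    then show ?thesis using level_Max[OF se j] False by simp
  qed
qed


definition Inv :: "(nat \<Rightarrow> real) \<Rightarrow> nat \<Rightarrow> nat list \<Rightarrow> (nat \<Rightarrow> nat) \<Rightarrow> bool" where
  "Inv x n w f \<longleftrightarrow> valid w \<and> length w = n \<and> isoR n f (uio_prec x) (Pw w) \<and>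
     (\<forall>v\<in>{1..n}. w ! (f v - 1) = lvl x v) \<and>
     (\<forall>u\<in>{1..n}. \<forall>v\<in>{1..n}. lvl x u = lvl x v \<longrightarrow> u < v \<longrightarrow> f u < f v)"

definition Sset :: "(nat \<Rightarrow> real) \<Rightarrow> nat \<Rightarrow> (nat \<Rightarrow> nat) \<Rightarrow> nat set" where
  "Sset x n f = f ` {u \<in> {1..n}. lvl x u = lvl x (Suc n) \<or> (Suc (lvl x u) = lvl x (Suc n) \<and> u \<le> kk x (Suc n))}"

definition pp :: "(nat \<Rightarrow> real) \<Rightarrow> nat \<Rightarrow> (nat \<Rightarrow> nat) \<Rightarrow> nat" where
  "pp x n f = Max (insert 0 (Sset x n f))"

definition ins :: "nat \<Rightarrow> nat \<Rightarrow> nat list \<Rightarrow> nat list" where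
  "ins p a w = take p w @ [a] @ drop p w"

definition fsh :: "nat \<Rightarrow> nat \<Rightarrow> (nat \<Rightarrow> nat) \<Rightarrow> nat \<Rightarrow> nat" where
  "fsh n p f v = (if v = Suc n then Suc p else if f v \<le> p then f v else Suc (f v))"

lemma nth_ins: "p \<le> length w \<Longrightarrow> q < Suc (length w) \<Longrightarrow>
   ins p a w ! q = (if q < p then w ! q else if q = p then a else w ! (q - 1))"
  by (auto simp: ins_def nth_append min_def)

context
  fixes x :: "nat \<Rightarrow> real" and n :: nat and w :: "nat list" and f :: "nat \<Rightarrow> nat"
  assumes se: "sorted_endpoints x (Suc n)" and inv: "Inv x n w f"
begin

abbreviation "ELL \<equiv> lvl x (Suc n)"
abbreviation "KQ \<equiv> kk x (Suc n)"
abbreviation "PP \<equiv> pp x n f"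

lemma vw: "valid w" and lw: "length w = n" and iso: "isoR n f (uio_prec x) (Pw w)"
  and vals: "\<And>v. v \<in> {1..n} \<Longrightarrow> w ! (f v - 1) = lvl x v"
  and mono: "\<And>u v. u \<in> {1..n} \<Longrightarrow> v \<in> {1..n} \<Longrightarrow> lvl x u = lvl x v \<Longrightarrow> u < v \<Longrightarrow> f u < f v"
  using inv unfolding Inv_def by auto

lemma bf: "bij_betw f {1..n} {1..n}" using iso unfolding isoR_def by blast

lemma rel: "\<And>i j. i \<in> {1..n} \<Longrightarrow> j \<in> {1..n} \<Longrightarrow> uio_prec x i j \<longleftrightarrow> Pw w (f i) (f j)"
  using iso unfolding isoR_def by blast

lemma fin: "v \<in> {1..n} \<Longrightarrow> f v \<in> {1..n}" using bij_betw_apply[OF bf] by blast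

lemma finj: "u \<in> {1..n} \<Longrightarrow> v \<in> {1..n} \<Longrightarrow> f u = f v \<Longrightarrow> u = v"
  using bf unfolding bij_betw_def inj_on_def by blast

lemma fsurj: "q \<in> {1..n} \<Longrightarrow> \<exists>v\<in>{1..n}. f v = q"
proof -
  assume "q \<in> {1..n}"
  then have "q \<in> f ` {1..n}" using bf unfolding bij_betw_def by simp
  then show ?thesis by blast
qed

lemma lvl_le: "u \<in> {1..n} \<Longrightarrow> lvl x u \<le> ELL"
  using level_mono[OF se, of u "Suc n"] by auto

lemma kq_le: "KQ \<le> n" using kk_lt[OF se, of "Suc n"] by simp

lemma ell_rec: "ELL = (if KQ = 0 then 0 else Suc (lvl x KQ))"
  using level_rec[OF se, of "Suc n"] by simp

lemma ell_gt: "u \<in> {1..n} \<Longrightarrow> lvl x u = ELL \<Longrightarrow> KQ < u"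
proof (rule ccontr)
  assume u: "u \<in> {1..n}" and l: "lvl x u = ELL" and "\<not> KQ < u"
  then have uk: "u \<le> KQ" by simp
  then have k0: "KQ \<noteq> 0" using u by auto
  have "lvl x u \<le> lvl x KQ" using level_mono[OF se, of u KQ] uk u kq_le by auto
  then show False using ell_rec k0 l by simp
qed

lemma below: "u \<in> {1..n} \<Longrightarrow> lvl x u + 2 \<le> ELL \<Longrightarrow> u \<le> KQ"
proof (rule ccontr)
  assume u: "u \<in> {1..n}" and l: "lvl x u + 2 \<le> ELL" and "\<not> u \<le> KQ"
  then have uk: "KQ < u" by simp
  have k0: "KQ \<noteq> 0" using ell_rec l by (metis add_leE not_numeral_le_zero)
  have "lvl x KQ \<le> lvl x u" using level_mono[OF se, of KQ u] uk u k0 by auto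
  then show False using ell_rec k0 l by simp
qed

lemma wle: "q < n \<Longrightarrow> w ! q \<le> ELL"
proof -
  assume q: "q < n"
  obtain v where v: "v \<in> {1..n}" "f v = Suc q" using fsurj[of "Suc q"] q by auto
  then show ?thesis using vals[OF v(1)] lvl_le[OF v(1)] by simp
qed

lemma S_sub: "Sset x n f \<subseteq> {1..n}"
proof
  fix s assume "s \<in> Sset x n f"
  then obtain u where "u \<in> {1..n}" "s = f u" unfolding Sset_def by blast
  then show "s \<in> {1..n}" using fin by blast
qed

lemma S_fin0: "finite (Sset x n f)" using finite_subset[OF S_sub] by simp

lemma S_fin: "finite (insert 0 (Sset x n f))" using S_fin0 by simp

lemma p_le: "PP \<le> n"
  unfolding pp_def
proof (rule Max.boundedI)
  show "finite (insert 0 (Sset x n f))" by (rule S_fin)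
  show "insert 0 (Sset x n f) \<noteq> {}" by simp
  fix a assume "a \<in> insert 0 (Sset x n f)"
  then show "a \<le> n" using S_sub by auto
qed

lemma ge_p: "s \<in> Sset x n f \<Longrightarrow> s \<le> PP"
  unfolding pp_def using Max_ge[OF S_fin] by simp

lemma inS: "u \<in> {1..n} \<Longrightarrow> lvl x u = ELL \<or> (Suc (lvl x u) = ELL \<and> u \<le> KQ) \<Longrightarrow> f u \<in> Sset x n f"
  unfolding Sset_def by (rule imageI) simp

lemma ell_pos: "u \<in> {1..n} \<Longrightarrow> lvl x u = ELL \<Longrightarrow> f u \<le> PP"
  using ge_p inS by blast

lemma key: "u \<in> {1..n} \<Longrightarrow> Suc (lvl x u) = ELL \<Longrightarrow> f u \<le> PP \<longleftrightarrow> u \<le> KQ"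
proof
  assume u: "u \<in> {1..n}" and l: "Suc (lvl x u) = ELL"
  show "u \<le> KQ \<Longrightarrow> f u \<le> PP" using ge_p inS u l by blast
  assume fp: "f u \<le> PP"
  show "u \<le> KQ"
  proof (rule ccontr)
    assume "\<not> u \<le> KQ"
    then have uk: "KQ < u" by simp
    have "\<forall>s \<in> insert 0 (Sset x n f). s < f u"
    proof
      fix s assume s: "s \<in> insert 0 (Sset x n f)"
      show "s < f u"
      proof (cases "s = 0")
        case True then show ?thesis using fin[OF u] by simp
      next
        case False
        then obtain u' where u': "u' \<in> {1..n}" "s = f u'"
          "lvl x u' = ELL \<or> (Suc (lvl x u') = ELL \<and> u' \<le> KQ)"
          using s False unfolding Sset_def by blast
        show ?thesis
        proof (cases "lvl x u' = ELL")
          case True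
          have "kk x u' \<le> KQ" using kk_mono[OF se, of u' "Suc n"] u' by auto
          then have nr: "\<not> uio_prec x u u'" using kk_iff[OF se, of u u'] u u' uk by auto
          have "\<not> Pw w (f u) (f u')" using rel[OF u u'(1)] nr by simp
          moreover have "w ! (f u - 1) = lvl x u" "w ! (f u' - 1) = ELL" using vals u u'(1) True by auto
          ultimately have "\<not> f u < f u'" unfolding Pw_def using l by auto
          moreover have "f u \<noteq> f u'" using finj[OF u u'(1)] l True by auto
          ultimately show ?thesis using u'(2) by simp
        next
          case False
          then have "Suc (lvl x u') = ELL" "u' \<le> KQ" using u' by auto
          then show ?thesis using mono[OF u'(1) u] l uk u'(2) by simp
        qed
      qed
    qed
    then have "PP < f u" unfolding pp_def using S_fin by simp
    then show False using fp by simp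
  qed
qed

lemma p0: "PP = 0 \<Longrightarrow> ELL = 0"
proof (rule ccontr)
  assume PP: "PP = 0" and "ELL \<noteq> 0"
  then have k0: "KQ \<noteq> 0" using ell_rec by (metis (full_types))
  then have ku: "KQ \<in> {1..n}" using kq_le by auto
  have "Suc (lvl x KQ) = ELL" using ell_rec k0 by simp
  then have "f KQ \<le> PP" using key[OF ku] by simp
  then show False using fin[OF ku] PP by simp
qed

lemma ppos: "0 < PP \<Longrightarrow> w ! (PP - 1) = ELL \<or> Suc (w ! (PP - 1)) = ELL"
proof -
  assume "0 < PP"
  then have "PP \<in> Sset x n f" unfolding pp_def using Max_in[OF S_fin] by (metis insertE insert_not_empty less_irrefl pp_def)
  then obtain u where "u \<in> {1..n}" "PP = f u" "lvl x u = ELL \<or> Suc (lvl x u) = ELL"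
    unfolding Sset_def by blast
  then show ?thesis using vals by auto
qed

abbreviation "WW \<equiv> ins PP ELL w"
abbreviation "FF \<equiv> fsh n PP f"

lemma nth_WW: "q < Suc n \<Longrightarrow> WW ! q = (if q < PP then w ! q else if q = PP then ELL else w ! (q - 1))"
  using nth_ins[of PP w q ELL] p_le lw by simp

lemma length_WW: "length WW = Suc n"
  using p_le lw by (simp add: ins_def)

lemma valid_WW: "valid WW"
  unfolding valid_nth length_WW
proof (intro allI impI)
  fix q assume q: "q < Suc n"
  have vn: "\<And>i. i < n \<Longrightarrow> w ! i \<le> (if i = 0 then 0 else Suc (w ! (i - 1)))"
    using vw lw unfolding valid_nth by blast
  show "WW ! q \<le> (if q = 0 then 0 else Suc (WW ! (q - 1)))"
  proof (cases "q < PP")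
    case True
    then show ?thesis using nth_WW[OF q] nth_WW[of "q - 1"] vn[of q] p_le q by auto
  next
    case False
    show ?thesis
    proof (cases "q = PP")
      case True
      show ?thesis
      proof (cases "PP = 0")
        case True
        then show ?thesis using nth_WW[OF q] p0 \<open>q = PP\<close> by simp
      next
        case False
        then show ?thesis using nth_WW[OF q] nth_WW[of "q - 1"] ppos \<open>q = PP\<close> q by auto
      qed
    next
      case qp: False
      then have pq: "PP < q" using False by simp
      show ?thesis
      proof (cases "q - 1 = PP")
        case True
        then show ?thesis using nth_WW[OF q] nth_WW[of "q - 1"] wle[of "q - 1"] pq q by auto
      next
        case False
        then have q2: "PP < q - 1" "q - 1 < n" "\<not> q \<le> 1" "q - 1 - 1 = q - 2" using pq q by auto
        have "w ! (q - 1) \<le> Suc (w ! (q - 2))" using vn[of "q - 1"] q2 by simp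
        moreover have "WW ! q = w ! (q - 1)" using nth_WW[OF q] pq by simp
        moreover have "WW ! (q - 1) = w ! (q - 2)" using nth_WW[of "q - 1"] q2 q by simp
        ultimately show ?thesis using q2 by simp
      qed
    qed
  qed
qed

lemma FF_old: "v \<in> {1..n} \<Longrightarrow> FF v = (if f v \<le> PP then f v else Suc (f v))"
  unfolding fsh_def by simp

lemma FF_new: "FF (Suc n) = Suc PP" unfolding fsh_def by simp

lemma val_old: "v \<in> {1..n} \<Longrightarrow> WW ! (FF v - 1) = w ! (f v - 1)"
proof -
  assume v: "v \<in> {1..n}"
  have fv: "f v \<in> {1..n}" using fin[OF v] .
  show ?thesis
  proof (cases "f v \<le> PP")
    case True
    then show ?thesis using FF_old[OF v] nth_WW[of "f v - 1"] fv by auto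
  next
    case False
    then show ?thesis using FF_old[OF v] nth_WW[of "f v"] fv by auto
  qed
qed

lemma val_new: "WW ! (FF (Suc n) - 1) = ELL"
  using FF_new nth_WW[of PP] p_le by simp

lemma ord_old: "u \<in> {1..n} \<Longrightarrow> v \<in> {1..n} \<Longrightarrow> FF u < FF v \<longleftrightarrow> f u < f v"
  using FF_old by auto

lemma FF_range: "v \<in> {1..Suc n} \<Longrightarrow> FF v \<in> {1..Suc n}"
proof -
  assume v: "v \<in> {1..Suc n}"
  show ?thesis
  proof (cases "v = Suc n")
    case True then show ?thesis using FF_new p_le by simp
  next
    case False
    then have "v \<in> {1..n}" using v by auto
    then show ?thesis using FF_old fin by fastforce
  qed
qed

lemma FF_inj: "inj_on FF {1..Suc n}"
proof (rule inj_onI)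
  fix u v assume u: "u \<in> {1..Suc n}" and v: "v \<in> {1..Suc n}" and e: "FF u = FF v"
  have ne: "\<And>a. a \<in> {1..n} \<Longrightarrow> FF a \<noteq> Suc PP" using FF_old by auto
  show "u = v"
  proof (cases "u = Suc n"; cases "v = Suc n")
    assume "u = Suc n" "v = Suc n" then show ?thesis by simp
  next
    assume "u = Suc n" "v \<noteq> Suc n"
    then show ?thesis using ne[of v] v e FF_new by auto
  next
    assume "u \<noteq> Suc n" "v = Suc n"
    then show ?thesis using ne[of u] u e FF_new by auto
  next
    assume "u \<noteq> Suc n" "v \<noteq> Suc n"
    then have u': "u \<in> {1..n}" and v': "v \<in> {1..n}" using u v by auto
    then have "f u = f v" using e FF_old[OF u'] FF_old[OF v'] by (auto split: if_splits)
    then show ?thesis using finj[OF u' v'] by simp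
  qed
qed

lemma FF_bij: "bij_betw FF {1..Suc n} {1..Suc n}"
proof -
  have sub: "FF ` {1..Suc n} \<subseteq> {1..Suc n}" using FF_range by auto
  have "card (FF ` {1..Suc n}) = card {1..Suc n}" using card_image[OF FF_inj] .
  then have "FF ` {1..Suc n} = {1..Suc n}" using sub card_subset_eq by (metis finite_atLeastAtMost)
  then show ?thesis using FF_inj unfolding bij_betw_def by simp
qed

lemma rel_new: "i \<in> {1..Suc n} \<Longrightarrow> j \<in> {1..Suc n} \<Longrightarrow> uio_prec x i j \<longleftrightarrow> Pw WW (FF i) (FF j)"
proof -
  assume i: "i \<in> {1..Suc n}" and j: "j \<in> {1..Suc n}"
  show ?thesis
  proof (cases "i = Suc n"; cases "j = Suc n")
    assume "i = Suc n" "j = Suc n"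
    then show ?thesis unfolding uio_prec_def Pw_def by simp
  next
    assume a: "i = Suc n" "j \<noteq> Suc n"
    then have j': "j \<in> {1..n}" using j by auto
    have "\<not> uio_prec x i j" using prec_lt[OF se i j] a j' by auto
    moreover have "\<not> Pw WW (FF i) (FF j)"
      using val_new val_old[OF j'] vals[OF j'] lvl_le[OF j'] a unfolding Pw_def by auto
    ultimately show ?thesis by simp
  next
    assume a: "i \<noteq> Suc n" "j = Suc n"
    then have i': "i \<in> {1..n}" using i by auto
    have r: "uio_prec x i j \<longleftrightarrow> i \<le> KQ" using kk_iff[OF se i j] a by simp
    have vi: "WW ! (FF i - 1) = lvl x i" using val_old[OF i'] vals[OF i'] by simp
    have vj: "WW ! (FF j - 1) = ELL" using val_new a by simp
    have li: "lvl x i \<le> ELL" using lvl_le[OF i'] .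
    consider "lvl x i + 2 \<le> ELL" | "Suc (lvl x i) = ELL" | "lvl x i = ELL" using li by linarith
    then show ?thesis
    proof cases
      case 1
      then show ?thesis using r below[OF i'] vi vj unfolding Pw_def by auto
    next
      case 2
      have "FF i < FF j \<longleftrightarrow> f i \<le> PP" using FF_old[OF i'] a FF_new by auto
      then show ?thesis using r key[OF i' 2] vi vj 2 unfolding Pw_def by auto
    next
      case 3
      then show ?thesis using r ell_gt[OF i'] vi vj unfolding Pw_def by auto
    qed
  next
    assume a: "i \<noteq> Suc n" "j \<noteq> Suc n"
    then have i': "i \<in> {1..n}" and j': "j \<in> {1..n}" using i j by auto
    have "uio_prec x i j \<longleftrightarrow> Pw w (f i) (f j)" using rel[OF i' j'] .
    also have "\<dots> \<longleftrightarrow> Pw WW (FF i) (FF j)"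
      unfolding Pw_def using val_old[OF i'] val_old[OF j'] ord_old[OF i' j'] by simp
    finally show ?thesis .
  qed
qed

lemma Inv_step: "Inv x (Suc n) WW FF"
  unfolding Inv_def
proof (intro conjI ballI impI)
  show "valid WW" by (rule valid_WW)
  show "length WW = Suc n" by (rule length_WW)
  show "isoR (Suc n) FF (uio_prec x) (Pw WW)" unfolding isoR_def using FF_bij rel_new by blast
next
  fix v assume v: "v \<in> {1..Suc n}"
  show "WW ! (FF v - 1) = lvl x v"
  proof (cases "v = Suc n")
    case True then show ?thesis using val_new by simp
  next
    case False
    then have "v \<in> {1..n}" using v by auto
    then show ?thesis using val_old vals by simp
  qed
next
  fix u v assume u: "u \<in> {1..Suc n}" and v: "v \<in> {1..Suc n}" and l: "lvl x u = lvl x v" and uv: "u < v"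
  then have u': "u \<in> {1..n}" by auto
  show "FF u < FF v"
  proof (cases "v = Suc n")
    case True
    then have "f u \<le> PP" using ell_pos[OF u'] l by simp
    then show ?thesis using True FF_old[OF u'] FF_new by simp
  next
    case False
    then have v': "v \<in> {1..n}" using v by auto
    then show ?thesis using ord_old[OF u' v'] mono[OF u' v' l uv] by simp
  qed
qed

end


lemma exists_Inv: "sorted_endpoints x N \<Longrightarrow> \<exists>w f. Inv x N w f"
proof (induction N)
  case 0
  have "Inv x 0 [] id" unfolding Inv_def isoR_def valid_def by simp
  then show ?case by blast
next
  case (Suc n)
  then obtain w f where "Inv x n w f" using se_mono_N[of x "Suc n" n] by auto
  then show ?case using Inv_step[OF Suc.prems] by blast
qed

lemma Inv_pmap: "Inv x N w f \<Longrightarrow> pmap N (uio_prec x) = pf w"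
  unfolding Inv_def using pmap_eq isoR_poset_iso by blast

lemma valid_le_idx: "valid w \<Longrightarrow> i < length w \<Longrightarrow> w ! i \<le> i"
proof (induction i)
  case 0 then show ?case by (auto simp: valid_nth)
next
  case (Suc i)
  then have "w ! Suc i \<le> Suc (w ! i)" by (auto simp: valid_nth)
  then show ?case using Suc by simp
qed

definition Z :: "nat list \<Rightarrow> nat \<Rightarrow> bool list" where
  "Z w K = concat (map (\<lambda>k. wordk k w) [0..<K])"

lemma filter_lt_Suc: "length (filter (\<lambda>a. g a < Suc K) w) = length (filter (\<lambda>a. g a < K) w) + length (filter (\<lambda>a. g a = K) w)"
  by (induction w) auto

lemma filter_disj: "length (filter (\<lambda>a. a = K \<or> Suc a = K) w) = length (filter (\<lambda>a. a = K) w) + length (filter (\<lambda>a. Suc a = K) w)"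
  by (induction w) auto

lemma Z_len_gen: "length (Z w K) = length (filter (\<lambda>a. a < K) w) + length (filter (\<lambda>a. Suc a < K) w)"
proof (induction K)
  case 0 then show ?case by (simp add: Z_def)
next
  case (Suc K)
  have "length (Z w (Suc K)) = length (Z w K) + length (wordk K w)" by (simp add: Z_def)
  also have "length (wordk K w) = length (filter (\<lambda>a. a = K) w) + length (filter (\<lambda>a. Suc a = K) w)"
    unfolding wordk_def using filter_disj by simp
  finally show ?case using Suc filter_lt_Suc[of id K w] filter_lt_Suc[of Suc K w] by simp
qed

lemma count_wordk: "count_list (wordk K w) True = length (filter (\<lambda>a. a = K) w)"
  unfolding wordk_def by (induction w) auto

lemma Z_cnt_gen: "count_list (Z w K) True = length (filter (\<lambda>a. a < K) w)"
proof (induction K)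
  case 0 then show ?case by (simp add: Z_def)
next
  case (Suc K)
  have "count_list (Z w (Suc K)) True = count_list (Z w K) True + count_list (wordk K w) True" by (simp add: Z_def)
  then show ?case using Suc filter_lt_Suc[of id K w] count_wordk by simp
qed

lemma Z_len: "\<forall>a\<in>set w. Suc a < K \<Longrightarrow> length (Z w K) = 2 * length w"
proof -
  assume a: "\<forall>a\<in>set w. Suc a < K"
  then have "\<forall>a\<in>set w. a < K" by auto
  then show ?thesis using Z_len_gen[of w K] a by (simp add: filter_True)
qed

lemma Z_cnt: "\<forall>a\<in>set w. Suc a < K \<Longrightarrow> count_list (Z w K) True = length w"
proof -
  assume a: "\<forall>a\<in>set w. Suc a < K"
  then have "\<forall>a\<in>set w. a < K" by auto
  then show ?thesis using Z_cnt_gen[of w K] by (simp add: filter_True)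
qed

lemma concat_nil: "concat (map (\<lambda>k. []) xs) = []"
  by (induction xs) auto

lemma wordk_empty: "\<forall>a\<in>set w. a \<le> L \<Longrightarrow> Suc (Suc L) \<le> k \<Longrightarrow> wordk k w = []"
  unfolding wordk_def by (induction w) auto

lemma Z_trunc: "\<forall>a\<in>set w. a \<le> L \<Longrightarrow> Suc (Suc L) \<le> K \<or> w = [] \<Longrightarrow> Z w K = Z w (Suc (Suc L))"
proof -
  assume a: "\<forall>a\<in>set w. a \<le> L" and b: "Suc (Suc L) \<le> K \<or> w = []"
  show ?thesis
  proof (cases "w = []")
    case True
    then show ?thesis by (simp add: Z_def wordk_def concat_nil)
  next
    case False
    then have K: "Suc (Suc L) \<le> K" using b by simp
    have "[0..<K] = [0..<Suc (Suc L)] @ [Suc (Suc L)..<K]"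
      using K by (metis le_add_diff_inverse upt_add_eq_append zero_le)
    moreover have "concat (map (\<lambda>k. wordk k w) [Suc (Suc L)..<K]) = []"
      using wordk_empty[OF a] by simp
    ultimately show ?thesis unfolding Z_def by simp
  qed
qed

lemma Z_split: "Z w (Suc (Suc L)) = Z w L @ wordk L w @ wordk (Suc L) w"
  by (simp add: Z_def)

lemma map_eq_rep: "\<forall>a\<in>set xs. \<not> P a \<Longrightarrow> map P xs = replicate (length xs) False"
  by (induction xs) auto


lemma len_filter_drop: "p \<le> length w \<Longrightarrow>
  length (filter P (drop p w)) = card {q \<in> {1..length w}. p < q \<and> P (w ! (q - 1))}"
proof -
  assume p: "p \<le> length w"
  define A where "A = {i. i < length w - p \<and> P (w ! (p + i))}"
  have "length (filter P (drop p w)) = card {i. i < length (drop p w) \<and> P (drop p w ! i)}"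
    by (rule length_filter_conv_card)
  also have "{i. i < length (drop p w) \<and> P (drop p w ! i)} = A"
    unfolding A_def using p by simp
  also have "card A = card ((\<lambda>i. Suc (p + i)) ` A)"
  proof (rule card_image[symmetric])
    show "inj_on (\<lambda>i. Suc (p + i)) A" by (rule inj_onI) simp
  qed
  also have "(\<lambda>i. Suc (p + i)) ` A = {q \<in> {1..length w}. p < q \<and> P (w ! (q - 1))}"
  proof
    show "(\<lambda>i. Suc (p + i)) ` A \<subseteq> {q \<in> {1..length w}. p < q \<and> P (w ! (q - 1))}"
    proof
      fix q assume "q \<in> (\<lambda>i. Suc (p + i)) ` A"
      then obtain i where i: "i \<in> A" "q = Suc (p + i)" by blast
      then have "i < length w - p" "P (w ! (p + i))" unfolding A_def by simp_all
      then show "q \<in> {q \<in> {1..length w}. p < q \<and> P (w ! (q - 1))}" using i(2) by simp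
    qed
    show "{q \<in> {1..length w}. p < q \<and> P (w ! (q - 1))} \<subseteq> (\<lambda>i. Suc (p + i)) ` A"
    proof
      fix q assume q: "q \<in> {q \<in> {1..length w}. p < q \<and> P (w ! (q - 1))}"
      then have q1: "1 \<le> q" "q \<le> length w" "p < q" "P (w ! (q - 1))" by simp_all
      have e: "q = Suc (p + (q - 1 - p))" using q1 by simp
      have "q - 1 - p \<in> A" unfolding A_def using q1 by simp
      then show "q \<in> (\<lambda>i. Suc (p + i)) ` A" using e by (metis imageI)
    qed
  qed
  finally show ?thesis .
qed

context
  fixes x :: "nat \<Rightarrow> real" and n :: nat and w :: "nat list" and f :: "nat \<Rightarrow> nat"
  assumes se: "sorted_endpoints x (Suc n)" and inv: "Inv x n w f"
begin

lemma lw2: "length w = n" using inv unfolding Inv_def by simp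

lemma cnt_bij: "card {q \<in> {1..n}. Q q (w ! (q - 1))} = card {v \<in> {1..n}. Q (f v) (lvl x v)}"
proof -
  have "f ` {v \<in> {1..n}. Q (f v) (lvl x v)} = {q \<in> {1..n}. Q q (w ! (q - 1))}"
  proof
    show "f ` {v \<in> {1..n}. Q (f v) (lvl x v)} \<subseteq> {q \<in> {1..n}. Q q (w ! (q - 1))}"
    proof
      fix q assume "q \<in> f ` {v \<in> {1..n}. Q (f v) (lvl x v)}"
      then obtain v where v: "v \<in> {1..n}" "Q (f v) (lvl x v)" "q = f v" by blast
      then show "q \<in> {q \<in> {1..n}. Q q (w ! (q - 1))}" using fin[OF se inv v(1)] vals[OF se inv v(1)] by simp
    qed
    show "{q \<in> {1..n}. Q q (w ! (q - 1))} \<subseteq> f ` {v \<in> {1..n}. Q (f v) (lvl x v)}"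
    proof
      fix q assume q: "q \<in> {q \<in> {1..n}. Q q (w ! (q - 1))}"
      then have q1: "q \<in> {1..n}" "Q q (w ! (q - 1))" by simp_all
      obtain v where v: "v \<in> {1..n}" "f v = q" using fsurj[OF se inv q1(1)] by blast
      have "Q (f v) (lvl x v)" using q1(2) vals[OF se inv v(1)] v(2) by simp
      then have "v \<in> {v \<in> {1..n}. Q (f v) (lvl x v)}" using v(1) by simp
      then show "q \<in> f ` {v \<in> {1..n}. Q (f v) (lvl x v)}" using v(2) by (metis imageI)
    qed
  qed
  moreover have "inj_on f {v \<in> {1..n}. Q (f v) (lvl x v)}"
  proof -
    have "inj_on f {1..n}" using bf[OF se inv] unfolding bij_betw_def by blast
    moreover have "{v \<in> {1..n}. Q (f v) (lvl x v)} \<subseteq> {1..n}" by blast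
    ultimately show ?thesis by (rule inj_on_subset)
  qed
  ultimately show ?thesis using card_image[of f "{v \<in> {1..n}. Q (f v) (lvl x v)}"] by simp
qed

lemma count_ell: "count_list w (lvl x (Suc n)) = card {v \<in> {1..n}. lvl x v = lvl x (Suc n)}"
proof -
  have "count_list w (lvl x (Suc n)) = length (filter (\<lambda>a. a = lvl x (Suc n)) w)"
    by (induction w) auto
  also have "\<dots> = card {q \<in> {1..n}. w ! (q - 1) = lvl x (Suc n)}"
    using card_filter_Suc[where P="\<lambda>a. a = lvl x (Suc n)" and w=w] lw2 by simp
  also have "\<dots> = card {v \<in> {1..n}. lvl x v = lvl x (Suc n)}"
    using cnt_bij[where Q="\<lambda>q a. a = lvl x (Suc n)"] by simp
  finally show ?thesis .
qed

lemma cnt_e: "length (filter (\<lambda>a. Suc a = lvl x (Suc n)) (drop (pp x n f) w)) =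
   card {v \<in> {1..n}. kk x (Suc n) < v \<and> Suc (lvl x v) = lvl x (Suc n)}"
proof -
  have "length (filter (\<lambda>a. Suc a = lvl x (Suc n)) (drop (pp x n f) w)) =
     card {q \<in> {1..n}. pp x n f < q \<and> Suc (w ! (q - 1)) = lvl x (Suc n)}"
    using len_filter_drop[of "pp x n f" w] p_le[OF se inv] lw2 by simp
  also have "\<dots> = card {v \<in> {1..n}. pp x n f < f v \<and> Suc (lvl x v) = lvl x (Suc n)}"
    using cnt_bij[where Q="\<lambda>q a. pp x n f < q \<and> Suc a = lvl x (Suc n)"] by simp
  also have "{v \<in> {1..n}. pp x n f < f v \<and> Suc (lvl x v) = lvl x (Suc n)} =
      {v \<in> {1..n}. kk x (Suc n) < v \<and> Suc (lvl x v) = lvl x (Suc n)}"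
    using key[OF se inv] by (auto simp: not_le[symmetric])
  finally show ?thesis .
qed

lemma card_sum: "card {v \<in> {1..n}. lvl x v = lvl x (Suc n)} +
   card {v \<in> {1..n}. kk x (Suc n) < v \<and> Suc (lvl x v) = lvl x (Suc n)} = n - kk x (Suc n)"
proof -
  define A where "A = {v \<in> {1..n}. lvl x v = lvl x (Suc n)}"
  define B where "B = {v \<in> {1..n}. kk x (Suc n) < v \<and> Suc (lvl x v) = lvl x (Suc n)}"
  have "A \<union> B = {kk x (Suc n) + 1..n}"
  proof
    show "A \<union> B \<subseteq> {kk x (Suc n) + 1..n}"
      unfolding A_def B_def using ell_gt[OF se inv] by fastforce
    show "{kk x (Suc n) + 1..n} \<subseteq> A \<union> B"
    proof
      fix v assume v: "v \<in> {kk x (Suc n) + 1..n}"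
      then have v': "v \<in> {1..n}" by auto
      have le: "lvl x v \<le> lvl x (Suc n)" using lvl_le[OF se inv v'] .
      have "lvl x v = lvl x (Suc n) \<or> Suc (lvl x v) = lvl x (Suc n)"
      proof (cases "kk x (Suc n) = 0")
        case True
        then show ?thesis using ell_rec[OF se inv] le by simp
      next
        case False
        have "lvl x (kk x (Suc n)) \<le> lvl x v"
          using level_mono[OF se, of "kk x (Suc n)" v] False v by auto
        moreover have "lvl x (Suc n) = Suc (lvl x (kk x (Suc n)))" using ell_rec[OF se inv] False by simp
        ultimately show ?thesis using le by linarith
      qed
      then show "v \<in> A \<union> B" unfolding A_def B_def using v v' by auto
    qed
  qed
  moreover have "A \<inter> B = {}" unfolding A_def B_def by auto
  moreover have "finite A" "finite B" unfolding A_def B_def by auto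
  ultimately have "card A + card B = card {kk x (Suc n) + 1..n}" by (metis card_Un_disjoint)
  then show ?thesis unfolding A_def B_def by simp
qed

lemma no_ell_after: "pp x n f \<le> q \<Longrightarrow> q < n \<Longrightarrow> w ! q \<noteq> lvl x (Suc n)"
proof
  assume q: "pp x n f \<le> q" "q < n" and e: "w ! q = lvl x (Suc n)"
  obtain v where v: "v \<in> {1..n}" "f v = Suc q" using fsurj[OF se inv, of "Suc q"] q by auto
  then have "lvl x v = lvl x (Suc n)" using vals[OF se inv v(1)] e by simp
  then have "f v \<le> pp x n f" using ell_pos[OF se inv v(1)] by simp
  then show False using v q by simp
qed

lemma no_ell_drop: "a \<in> set (drop (pp x n f) w) \<Longrightarrow> a \<noteq> lvl x (Suc n)"
proof -
  assume "a \<in> set (drop (pp x n f) w)"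
  then obtain i where i: "i < length (drop (pp x n f) w)" "a = drop (pp x n f) w ! i"
    by (auto simp: in_set_conv_nth)
  then have "a = w ! (pp x n f + i)" "pp x n f + i < n" using p_le[OF se inv] lw2 by auto
  then show ?thesis using no_ell_after by simp
qed

end


lemma wordk_Suc_rep: "\<forall>a\<in>set v. a \<le> L \<Longrightarrow> wordk (Suc L) v = replicate (count_list v L) False"
  unfolding wordk_def by (induction v) auto

lemma wordk_drop_rep: "\<forall>a\<in>set v. a \<noteq> L \<Longrightarrow> wordk L v = replicate (length (filter (\<lambda>a. Suc a = L) v)) False"
  unfolding wordk_def by (induction v) auto

theorem mainTheorem8:
  fixes x :: "nat \<Rightarrow> real" and n :: nat
  assumes "sorted_endpoints x (Suc n)"
  defines "lv \<equiv> level (uio_prec x) (Suc n)"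
      and "w \<equiv> area_seq (pmap n (uio_prec x))"
      and "w' \<equiv> area_seq (pmap (Suc n) (uio_prec x))"
  shows "\<exists>j \<le> n. w' = take j w @ [lv] @ drop j w \<and>
           (let r = count_list w lv +
                    length (filter (\<lambda>a. int a = int lv - 1) (drop (Suc j) w'))
            in r \<le> n \<and> add_final_peak n (zeta (pmap n (uio_prec x))) (n - r)
                        (zeta (pmap (Suc n) (uio_prec x))))"
proof -
  have se: "sorted_endpoints x (Suc n)" by (rule assms(1))
  have sen: "sorted_endpoints x n" using se_mono_N[OF se, of n] by simp
  obtain w0 f0 where inv0: "Inv x n w0 f0" using exists_Inv[OF sen] by blast
  define p where "p = pp x n f0"
  define L where "L = lvl x (Suc n)"
  define kq where "kq = kk x (Suc n)"
  define w1 where "w1 = ins p L w0"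
  have inv1: "Inv x (Suc n) w1 (fsh n p f0)"
    using Inv_step[OF se inv0] unfolding w1_def p_def L_def .
  have lw0: "length w0 = n" and vw0: "valid w0" using inv0 unfolding Inv_def by auto
  have lw1: "length w1 = Suc n" and vw1: "valid w1" using inv1 unfolding Inv_def by auto
  have pm0: "pmap n (uio_prec x) = pf w0" using Inv_pmap[OF inv0] .
  have pm1: "pmap (Suc n) (uio_prec x) = pf w1" using Inv_pmap[OF inv1] .
  have hw: "w = w0" unfolding w_def pm0 using area_pf[OF vw0] .
  have hw': "w' = w1" unfolding w'_def pm1 using area_pf[OF vw1] .
  have hlv: "lv = L" unfolding lv_def L_def ..
  have pn: "p \<le> n" unfolding p_def using p_le[OF se inv0] .
  have w1eq: "w1 = take p w0 @ [L] @ drop p w0" unfolding w1_def ins_def ..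
  have kqn: "kq \<le> n" unfolding kq_def using kq_le[OF se inv0] .
  define c where "c = count_list w0 L"
  define e where "e = length (filter (\<lambda>a. Suc a = L) (drop p w0))"
  have dr: "drop (Suc p) w1 = drop p w0" unfolding w1eq using pn lw0 by simp
  have fi: "filter (\<lambda>a. int a = int L - 1) (drop p w0) = filter (\<lambda>a. Suc a = L) (drop p w0)"
    by (rule filter_cong) auto
  have ce: "c + e = n - kq"
    unfolding c_def e_def L_def kq_def p_def
    using count_ell[OF se inv0] cnt_e[OF se inv0] card_sum[OF se inv0] by simp
  define r where "r = c + e"
  have rn: "r \<le> n" unfolding r_def using ce by simp
  have nr: "n - r = kq" unfolding r_def using ce kqn by simp
  have v0: "\<forall>a\<in>set w0. a \<le> L"
  proof
    fix a assume "a \<in> set w0"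
    then obtain q where "q < n" "a = w0 ! q" using lw0 by (auto simp: in_set_conv_nth)
    then show "a \<le> L" unfolding L_def using wle[OF se inv0] by simp
  qed
  have v1: "\<forall>a\<in>set w1. a \<le> L" using v0 unfolding w1eq by (auto dest: in_set_takeD in_set_dropD)
  have Ln: "L \<le> n"
  proof -
    have "w1 ! p = L" unfolding w1eq using pn lw0 by (simp add: nth_append)
    then have "L \<le> p" using valid_le_idx[OF vw1, of p] pn lw1 by simp
    then show ?thesis using pn by simp
  qed
  have s0: "\<forall>a\<in>set w0. Suc a < Suc (2 * n)"
  proof
    fix a assume "a \<in> set w0"
    then obtain q where "q < n" "a = w0 ! q" using lw0 by (auto simp: in_set_conv_nth)
    then show "Suc a < Suc (2 * n)" using valid_le_idx[OF vw0, of q] lw0 by simp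
  qed
  have z0: "zeta (pmap n (uio_prec x)) = Z w0 (Suc (2 * n))"
    unfolding pm0 Z_def using zeta_formula[OF dyck_pf[OF vw0]] area_pf[OF vw0] dyck_pf[OF vw0] lw0
    by (simp add: dyck_path_def)
  have z1: "zeta (pmap (Suc n) (uio_prec x)) = Z w1 (Suc (2 * Suc n))"
    unfolding pm1 Z_def using zeta_formula[OF dyck_pf[OF vw1]] area_pf[OF vw1] dyck_pf[OF vw1] lw1
    by (simp add: dyck_path_def)
  have t0: "Z w0 (Suc (2 * n)) = Z w0 (Suc (Suc L))"
  proof (rule Z_trunc[OF v0])
    show "Suc (Suc L) \<le> Suc (2 * n) \<or> w0 = []"
    proof (cases "n = 0")
      case True then show ?thesis using lw0 by simp
    next
      case False then show ?thesis using Ln by simp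
    qed
  qed
  have t1: "Z w1 (Suc (2 * Suc n)) = Z w1 (Suc (Suc L))"
  proof (rule Z_trunc[OF v1])
    show "Suc (Suc L) \<le> Suc (2 * Suc n) \<or> w1 = []" using Ln by simp
  qed
  have low: "Z w1 L = Z w0 L"
    unfolding Z_def
  proof (rule arg_cong[where f=concat], rule map_cong[OF refl])
    fix k assume "k \<in> set [0..<L]"
    then have k: "k < L" by simp
    have "wordk k w1 = wordk k (take p w0) @ wordk k [L] @ wordk k (drop p w0)"
      unfolding w1eq wordk_append ..
    also have "wordk k [L] = []" using k by (simp add: wordk_single)
    also have "wordk k (take p w0) @ [] @ wordk k (drop p w0) = wordk k w0"
      using wordk_append[of k "take p w0" "drop p w0"] by simp
    finally show "wordk k w1 = wordk k w0" .
  qed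
  have nodrop: "\<forall>a\<in>set (drop p w0). a \<noteq> L"
    using no_ell_drop[OF se inv0] unfolding p_def L_def by blast
  have wl0: "wordk L w0 = wordk L (take p w0) @ replicate e False"
    using wordk_append[of L "take p w0" "drop p w0"] wordk_drop_rep[OF nodrop] unfolding e_def by simp
  have wl1: "wordk L w1 = wordk L (take p w0) @ True # replicate e False"
    unfolding w1eq wordk_append using wordk_drop_rep[OF nodrop] unfolding e_def by (simp add: wordk_single)
  have ws0: "wordk (Suc L) w0 = replicate c False" unfolding c_def using wordk_Suc_rep[OF v0] .
  have cw1: "count_list w1 L = Suc c" unfolding c_def w1eq
    using count_list_append[of "take p w0" "drop p w0" L] by simp
  have ws1: "wordk (Suc L) w1 = replicate (Suc c) False" using wordk_Suc_rep[OF v1] cw1 by simp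
  define B where "B = Z w0 L @ wordk L (take p w0)"
  have rep0: "replicate e False @ replicate c False = replicate r False"
    unfolding r_def by (metis add.commute replicate_add)
  have rep1: "replicate e False @ replicate (Suc c) False = replicate (Suc r) False"
    unfolding r_def by (metis add.commute add_Suc replicate_add)
  have Z0: "Z w0 (Suc (2 * n)) = B @ replicate r False"
    unfolding t0 Z_split B_def wl0 ws0 using rep0 by simp
  have Z1: "Z w1 (Suc (2 * Suc n)) = B @ True # replicate (Suc r) False"
    unfolding t1 Z_split B_def wl1 ws1 low using rep1 by simp
  have lenZ0: "length (Z w0 (Suc (2 * n))) = 2 * n" using Z_len[OF s0] lw0 by simp
  have cntZ0: "count_list (Z w0 (Suc (2 * n))) True = n" using Z_cnt[OF s0] lw0 by simp
  have lenB: "length B = n + kq" using lenZ0 Z0 rn nr by simp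
  have cntB: "count_list B True = n" using cntZ0 Z0 by simp
  have tk: "take (n + kq) (Z w0 (Suc (2 * n))) = B" using Z0 lenB by simp
  have afp: "add_final_peak n (zeta (pmap n (uio_prec x))) (n - r) (zeta (pmap (Suc n) (uio_prec x)))"
    unfolding add_final_peak_def z0 z1 nr
  proof (intro conjI)
    show "kq \<le> n" by (rule kqn)
    show "count_list (take (n + kq) (Z w0 (Suc (2 * n)))) True = n" using tk cntB by simp
    have "Suc n - kq = Suc r" using nr rn by simp
    then show "Z w1 (Suc (2 * Suc n)) = take (n + kq) (Z w0 (Suc (2 * n))) @ True # replicate (Suc n - kq) False"
      using tk Z1 by simp
  qed
  have rdef: "count_list w lv + length (filter (\<lambda>a. int a = int lv - 1) (drop (Suc p) w')) = r"
    unfolding hw hw' hlv dr fi r_def c_def e_def ..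
  show ?thesis
  proof (intro exI conjI)
    show "p \<le> n" by (rule pn)
    show "w' = take p w @ [lv] @ drop p w" unfolding hw hw' hlv by (rule w1eq)
    show "let r = count_list w lv + length (filter (\<lambda>a. int a = int lv - 1) (drop (Suc p) w'))
        in r \<le> n \<and> add_final_peak n (zeta (pmap n (uio_prec x))) (n - r) (zeta (pmap (Suc n) (uio_prec x)))"
      unfolding rdef Let_def using rn afp by simp
  qed
qed


end
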